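(* Let $\delta,\theta\in[0,1)$. Let $\mathscr{H}$ be a complex Hilbert space with $\dim\mathscr{H}>1$, let $\mathscr{A}$ be a $C^*$-algebra with $\mathbb{K}(\mathscr{H})\subseteq\mathscr{A}\subseteq\mathbb{B}(\mathscr{H})$, let $\mathscr{E}$ be a full Hilbert $\mathscr{A}$-module, and let $S:\mathscr{E}\to\mathscr{E}$ be a nonzero bounded linear mapping satisfying $$|\langle Sx,Sy\rangle|=\|S\|^2\,|\langle x,y\rangle|\qquad(x,y\in\mathscr{E}).$$ If $T:\mathscr{E}\to\mathscr{E}$ is a linear mapping with $\|T-S\|\leq\theta\|S\|$, then $T$ is $(\delta,\varepsilon)$-orthogonality preserving, where $\varepsilon=\frac{\theta^2+2\theta+\delta}{(1-\theta)^2}$.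
   Context: $\mathbb{B}(\mathscr{H})$ denotes the bounded operators and $\mathbb{K}(\mathscr{H})$ the compact operators on $\mathscr{H}$. A Hilbert $\mathscr{A}$-module is a right $\mathscr{A}$-module $\mathscr{E}$ with an $\mathscr{A}$-valued inner product $\langle\cdot,\cdot\rangle$ ($\mathbb{C}$-linear and $\mathscr{A}$-linear in the second variable, $\langle x,y\rangle^*=\langle y,x\rangle$, $\langle x,x\rangle\geq0$ with equality iff $x=0$) that is complete in the norm $\|x\|=\|\langle x,x\rangle\|^{1/2}$; it is full if the closed linear span of $\{\langle x,y\rangle\}$ is $\mathscr{A}$. For $a\in\mathscr{A}$, $|a|=(a^*a)^{1/2}$. A mapping $T$ is $(\delta,\varepsilon)$-orthogonality preserving if for all $x,y$, $\|\langle x,y\rangle\|\leq\delta\|x\|\,\|y\|$ implies $\|\langle Tx,Ty\rangle\|\leq\varepsilon\|Tx\|\,\|Ty\|$. *)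

theory Defs
  imports "HOL-Analysis.Analysis"
begin

class cvec = ab_group_add +
  fixes scaleC :: "complex \<Rightarrow> 'a \<Rightarrow> 'a" (infixr \<open>*\<^sub>C\<close> 75)
  assumes scaleC_add_right: "a *\<^sub>C (x + y) = a *\<^sub>C x + a *\<^sub>C y"
    and scaleC_add_left: "(a + b) *\<^sub>C x = a *\<^sub>C x + b *\<^sub>C x"
    and scaleC_scaleC: "a *\<^sub>C (b *\<^sub>C x) = (a * b) *\<^sub>C x"
    and scaleC_one: "1 *\<^sub>C x = x"

text \<open>A complex inner product space; it is also a real inner product space
  (inner = real part of the complex inner product), which provides the norm,
  metric and topology.\<close>
class complex_inner = cvec + real_inner +
  fixes cinner :: "'a \<Rightarrow> 'a \<Rightarrow> complex"
  assumes scaleR_scaleC: "scaleR r x = complex_of_real r *\<^sub>C x"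
    and inner_Re_cinner: "inner x y = Re (cinner x y)"
    and cinner_add_right: "cinner x (y + z) = cinner x y + cinner x z"
    and cinner_scaleC_right: "cinner x (c *\<^sub>C y) = c * cinner x y"
    and cinner_commute: "cinner y x = cnj (cinner x y)"

class chilbert = complex_inner + complete_space

definition clinear :: "('a::cvec \<Rightarrow> 'b::cvec) \<Rightarrow> bool" where
  "clinear f \<longleftrightarrow> (\<forall>x y. f (x + y) = f x + f y) \<and> (\<forall>c x. f (c *\<^sub>C x) = c *\<^sub>C f x)"

definition bop :: "('h::chilbert \<Rightarrow> 'h) set" where
  "bop = {f. clinear f \<and> bounded_linear f}"

definition kop :: "('h::chilbert \<Rightarrow> 'h) set" where
  "kop = {f. f \<in> bop \<and> compact (closure (f ` cball 0 1))}"

definition adjoint :: "('h::chilbert \<Rightarrow> 'h) \<Rightarrow> ('h \<Rightarrow> 'h)" where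
  "adjoint f = (THE g. \<forall>x y. cinner (f x) y = cinner x (g y))"

definition positive_op :: "('h::chilbert \<Rightarrow> 'h) \<Rightarrow> bool" where
  "positive_op p \<longleftrightarrow> (\<forall>x. cinner x (p x) \<in> \<real> \<and> Re (cinner x (p x)) \<ge> 0)"

definition op_sqrt :: "('h::chilbert \<Rightarrow> 'h) \<Rightarrow> ('h \<Rightarrow> 'h)" where
  "op_sqrt b = (THE p. p \<in> bop \<and> positive_op p \<and> p \<circ> p = b)"

definition op_abs :: "('h::chilbert \<Rightarrow> 'h) \<Rightarrow> ('h \<Rightarrow> 'h)" where
  "op_abs a = op_sqrt (adjoint a \<circ> a)"

definition cstar_subalg :: "('h::chilbert \<Rightarrow> 'h) set \<Rightarrow> bool" where
  "cstar_subalg A \<longleftrightarrow> A \<subseteq> bop \<and> (\<lambda>h. 0) \<in> A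
     \<and> (\<forall>a\<in>A. \<forall>b\<in>A. (\<lambda>h. a h + b h) \<in> A)
     \<and> (\<forall>a\<in>A. \<forall>c. (\<lambda>h. c *\<^sub>C a h) \<in> A)
     \<and> (\<forall>a\<in>A. \<forall>b\<in>A. a \<circ> b \<in> A)
     \<and> (\<forall>a\<in>A. adjoint a \<in> A)
     \<and> (\<forall>s b. (\<forall>n. s n \<in> A) \<and> b \<in> bop \<and> (\<lambda>n. onorm (\<lambda>h. s n h - b h)) \<longlonglongrightarrow> 0 \<longrightarrow> b \<in> A)"

definition mnorm :: "('e \<Rightarrow> 'e \<Rightarrow> ('h::chilbert \<Rightarrow> 'h)) \<Rightarrow> 'e \<Rightarrow> real" where
  "mnorm ip x = sqrt (onorm (ip x x))"

definition hilbert_module ::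
  "('h::chilbert \<Rightarrow> 'h) set \<Rightarrow> ('e::cvec \<Rightarrow> ('h \<Rightarrow> 'h) \<Rightarrow> 'e) \<Rightarrow> ('e \<Rightarrow> 'e \<Rightarrow> ('h \<Rightarrow> 'h)) \<Rightarrow> bool"
  where
  "hilbert_module A act ip \<longleftrightarrow>
     \<comment> \<open>right A-module, compatible with the complex vector space structure\<close>
     (\<forall>x y. \<forall>a\<in>A. act (x + y) a = act x a + act y a)
   \<and> (\<forall>x. \<forall>a\<in>A. \<forall>b\<in>A. act x (\<lambda>h. a h + b h) = act x a + act x b)
   \<and> (\<forall>x. \<forall>a\<in>A. \<forall>b\<in>A. act (act x a) b = act x (a \<circ> b))
   \<and> (\<forall>x c. \<forall>a\<in>A. act (c *\<^sub>C x) a = c *\<^sub>C act x a \<and> act x (\<lambda>h. c *\<^sub>C a h) = c *\<^sub>C act x a)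
     \<comment> \<open>A-valued inner product\<close>
   \<and> (\<forall>x y. ip x y \<in> A)
   \<and> (\<forall>x y z. ip x (y + z) = (\<lambda>h. ip x y h + ip x z h))
   \<and> (\<forall>x y c. ip x (c *\<^sub>C y) = (\<lambda>h. c *\<^sub>C ip x y h))
   \<and> (\<forall>x y. \<forall>a\<in>A. ip x (act y a) = ip x y \<circ> a)
   \<and> (\<forall>x y. adjoint (ip x y) = ip y x)
   \<and> (\<forall>x. positive_op (ip x x))
   \<and> (\<forall>x. ip x x = (\<lambda>h. 0) \<longleftrightarrow> x = 0)
     \<comment> \<open>completeness with respect to \<open>mnorm\<close>\<close>
   \<and> (\<forall>s. (\<forall>e>0. \<exists>N. \<forall>m\<ge>N. \<forall>n\<ge>N. mnorm ip (s m - s n) < e)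
          \<longrightarrow> (\<exists>l. (\<lambda>n. mnorm ip (s n - l)) \<longlonglongrightarrow> 0))"

text \<open>Full: the closed linear span of the inner products is A.\<close>
definition full_module ::
  "('h::chilbert \<Rightarrow> 'h) set \<Rightarrow> ('e \<Rightarrow> 'e \<Rightarrow> ('h \<Rightarrow> 'h)) \<Rightarrow> bool" where
  "full_module A ip \<longleftrightarrow>
     (\<forall>a\<in>A. \<forall>e>0. \<exists>(n::nat) c xs ys.
        onorm (\<lambda>h. a h - (\<Sum>i<n. c i *\<^sub>C ip (xs i) (ys i) h)) < e)"

definition mbounded :: "('e \<Rightarrow> 'e \<Rightarrow> ('h::chilbert \<Rightarrow> 'h)) \<Rightarrow> ('e::cvec \<Rightarrow> 'e) \<Rightarrow> bool" where
  "mbounded ip f \<longleftrightarrow> (\<exists>K. \<forall>x. mnorm ip (f x) \<le> K * mnorm ip x)"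

definition mopnorm :: "('e \<Rightarrow> 'e \<Rightarrow> ('h::chilbert \<Rightarrow> 'h)) \<Rightarrow> ('e \<Rightarrow> 'e) \<Rightarrow> real" where
  "mopnorm ip f = Sup {mnorm ip (f x) | x. mnorm ip x \<le> 1}"

definition orth_preserving ::
  "('e \<Rightarrow> 'e \<Rightarrow> ('h::chilbert \<Rightarrow> 'h)) \<Rightarrow> real \<Rightarrow> real \<Rightarrow> ('e \<Rightarrow> 'e) \<Rightarrow> bool" where
  "orth_preserving ip \<delta> \<epsilon> T \<longleftrightarrow>
     (\<forall>x y. onorm (ip x y) \<le> \<delta> * mnorm ip x * mnorm ip y
        \<longrightarrow> onorm (ip (T x) (T y)) \<le> \<epsilon> * mnorm ip (T x) * mnorm ip (T y))"

end

theory Submission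
  imports Defs "HOL-Computational_Algebra.Formal_Power_Series"
begin

lemma scaleC_zero_left[simp]: "(0::complex) *\<^sub>C (x::'a::cvec) = 0"
proof -
  have "(0::complex) *\<^sub>C x = (0 + 0) *\<^sub>C x" by simp
  also have "\<dots> = 0 *\<^sub>C x + 0 *\<^sub>C x" by (rule scaleC_add_left)
  finally show ?thesis by simp
qed

lemma scaleC_zero_right[simp]: "c *\<^sub>C (0::'a::cvec) = 0"
proof -
  have "c *\<^sub>C (0::'a) = c *\<^sub>C (0 + 0)" by simp
  also have "\<dots> = c *\<^sub>C 0 + c *\<^sub>C 0" by (rule scaleC_add_right)
  finally show ?thesis by simp
qed

lemma scaleC_minus_right: "c *\<^sub>C (- x) = - (c *\<^sub>C (x::'a::cvec))"
proof -
  have "c *\<^sub>C (- x) + c *\<^sub>C x = c *\<^sub>C (- x + x)" by (rule scaleC_add_right[symmetric])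
  also have "\<dots> = 0" by simp
  finally show ?thesis using eq_neg_iff_add_eq_0 by blast
qed

lemma scaleC_diff_right: "c *\<^sub>C (x - y) = c *\<^sub>C x - c *\<^sub>C (y::'a::cvec)"
  by (simp only: diff_conv_add_uminus scaleC_add_right scaleC_minus_right)

lemma scaleC_minus_left: "(- c) *\<^sub>C x = - (c *\<^sub>C (x::'a::cvec))"
proof -
  have "(- c) *\<^sub>C x + c *\<^sub>C x = (- c + c) *\<^sub>C x" by (rule scaleC_add_left[symmetric])
  also have "\<dots> = 0" by simp
  finally show ?thesis using eq_neg_iff_add_eq_0 by blast
qed

lemma scaleC_minus1: "(-1) *\<^sub>C x = - (x::'a::cvec)"
  by (simp add: scaleC_minus_left scaleC_one)

lemma scaleC_diff_left: "(a - b) *\<^sub>C x = a *\<^sub>C x - b *\<^sub>C (x::'a::cvec)"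
  by (simp only: diff_conv_add_uminus scaleC_add_left scaleC_minus_left)

lemma cinner_add_left: "cinner (x + y) z = cinner x z + cinner y (z::'a::complex_inner)"
proof -
  have "cinner (x + y) z = cnj (cinner z (x + y))" by (rule cinner_commute)
  also have "\<dots> = cnj (cinner z x) + cnj (cinner z y)" by (simp only: cinner_add_right complex_cnj_add)
  also have "\<dots> = cinner x z + cinner y z" by (simp only: cinner_commute[of x z] cinner_commute[of y z])
  finally show ?thesis .
qed

lemma cinner_scaleC_left: "cinner (c *\<^sub>C x) y = cnj c * cinner x (y::'a::complex_inner)"
proof -
  have "cinner (c *\<^sub>C x) y = cnj (cinner y (c *\<^sub>C x))" by (rule cinner_commute)
  also have "\<dots> = cnj c * cnj (cinner y x)" by (simp only: cinner_scaleC_right complex_cnj_mult)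
  also have "\<dots> = cnj c * cinner x y" by (simp only: cinner_commute[of x y])
  finally show ?thesis .
qed

lemma cinner_zero_right[simp]: "cinner x (0::'a::complex_inner) = 0"
  using cinner_scaleC_right[of x 0 0] by (simp only: scaleC_zero_left mult_zero_left)

lemma cinner_zero_left[simp]: "cinner (0::'a::complex_inner) x = 0"
  using cinner_scaleC_left[of 0 0 x] by (simp only: scaleC_zero_left complex_cnj_zero mult_zero_left)

lemma cinner_minus_right: "cinner x (- y) = - cinner x (y::'a::complex_inner)"
  using cinner_scaleC_right[of x "-1" y] by (simp only: scaleC_minus1 mult_minus1)

lemma cinner_minus_left: "cinner (- x) y = - cinner x (y::'a::complex_inner)"
  using cinner_scaleC_left[of "-1" x y] by (simp only: scaleC_minus1 mult_minus1 complex_cnj_minus complex_cnj_one)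

lemma cinner_diff_right: "cinner x (y - z) = cinner x y - cinner x (z::'a::complex_inner)"
  by (simp only: cinner_add_right cinner_minus_right diff_conv_add_uminus)

lemma cinner_diff_left: "cinner (x - y) z = cinner x z - cinner y (z::'a::complex_inner)"
  by (simp only: cinner_add_left cinner_minus_left diff_conv_add_uminus)

lemma Re_cinner: "Re (cinner x y) = inner x (y::'a::complex_inner)"
  by (simp add: inner_Re_cinner)

lemma Im_cinner: "Im (cinner x y) = Re (cinner (\<i> *\<^sub>C x) (y::'a::complex_inner))"
  by (simp add: cinner_scaleC_left)

lemma cinner_self: "cinner x x = complex_of_real ((norm (x::'a::complex_inner))\<^sup>2)"
proof -
  have "cinner x x = cnj (cinner x x)" by (rule cinner_commute)
  hence "Im (cinner x x) = Im (cnj (cinner x x))" by (rule arg_cong)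
  hence i: "Im (cinner x x) = 0" by simp
  have r: "Re (cinner x x) = (norm x)\<^sup>2" by (simp only: inner_Re_cinner[symmetric] power2_norm_eq_inner)
  show ?thesis by (rule complex_eqI) (simp_all only: i r Re_complex_of_real Im_complex_of_real)
qed

lemma cinner_self_eq_0: "cinner x x = 0 \<longleftrightarrow> x = (0::'a::complex_inner)"
  by (simp add: cinner_self)

lemma cinner_ext: "(\<And>k. cinner k u = cinner k (v::'a::complex_inner)) \<Longrightarrow> u = v"
proof -
  assume h: "\<And>k. cinner k u = cinner k v"
  have "cinner (u - v) (u - v) = 0" by (simp only: cinner_diff_right h diff_self)
  thus "u = v" by (simp add: cinner_self_eq_0)
qed

lemma scaleC_scaleR: "r *\<^sub>R (c *\<^sub>C x) = c *\<^sub>C (r *\<^sub>R (x::'a::complex_inner))"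
  by (simp only: scaleR_scaleC scaleC_scaleC mult.commute)

lemma scaleC_of_real: "complex_of_real r *\<^sub>C x = r *\<^sub>R (x::'a::complex_inner)"
  by (simp only: scaleR_scaleC)

lemma norm_scaleC: "norm (c *\<^sub>C x) = cmod c * norm (x::'a::complex_inner)"
proof -
  have "complex_of_real ((norm (c *\<^sub>C x))\<^sup>2) = cinner (c *\<^sub>C x) (c *\<^sub>C x)" by (rule cinner_self[symmetric])
  also have "\<dots> = (c * cnj c) * cinner x x" by (simp add: cinner_scaleC_left cinner_scaleC_right ac_simps)
  also have "\<dots> = complex_of_real ((cmod c)\<^sup>2) * complex_of_real ((norm x)\<^sup>2)"
    by (simp only: complex_norm_square cinner_self)
  also have "\<dots> = complex_of_real ((cmod c)\<^sup>2 * (norm x)\<^sup>2)" by (simp only: of_real_mult)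
  finally have "(norm (c *\<^sub>C x))\<^sup>2 = (cmod c * norm x)\<^sup>2" by (simp only: of_real_eq_iff power_mult_distrib)
  thus ?thesis by (simp add: power2_eq_iff_nonneg)
qed

lemma cinner_cauchy: "cmod (cinner x y) \<le> norm x * norm (y::'a::complex_inner)"
proof (cases "cinner x y = 0")
  case True thus ?thesis by simp
next
  case False
  define z where "z = cinner x y"
  have z0: "cmod z \<noteq> 0" using False by (simp add: z_def)
  define u where "u = cnj z / complex_of_real (cmod z)"
  have cu: "cmod u = 1" using z0 by (simp add: u_def norm_divide)
  have "u * z = (z * cnj z) / complex_of_real (cmod z)" by (simp add: u_def mult.commute)
  also have "\<dots> = complex_of_real ((cmod z)\<^sup>2) / complex_of_real (cmod z)" by (simp only: complex_norm_square)
  also have "\<dots> = complex_of_real (cmod z)" using z0 by (simp add: power2_eq_square)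
  finally have uz: "u * z = complex_of_real (cmod z)" .
  have "cmod z = Re (cinner x (u *\<^sub>C y))" by (simp add: cinner_scaleC_right z_def[symmetric] uz)
  also have "\<dots> = inner x (u *\<^sub>C y)" by (simp add: inner_Re_cinner)
  also have "\<dots> \<le> norm x * norm (u *\<^sub>C y)" by (rule norm_cauchy_schwarz)
  also have "\<dots> = norm x * norm y" by (simp add: norm_scaleC cu)
  finally show ?thesis by (simp add: z_def)
qed

lemma clinear_linear: "clinear f \<Longrightarrow> linear (f::'a::complex_inner \<Rightarrow> 'b::complex_inner)"
  unfolding clinear_def by (intro linearI) (simp_all only: scaleR_scaleC)

lemma clinear_add: "clinear f \<Longrightarrow> f (x + y) = f x + f y" by (simp add: clinear_def)
lemma clinear_scaleC: "clinear f \<Longrightarrow> f (c *\<^sub>C x) = c *\<^sub>C f x" by (simp add: clinear_def)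
lemma clinear_zero: "clinear f \<Longrightarrow> f 0 = (0::'a::cvec)"
  using clinear_scaleC[of f 0 0] by simp
lemma clinear_minus: "clinear f \<Longrightarrow> f (- x) = - f (x::'a::cvec)"
  using clinear_scaleC[of f "-1" x] by (simp add: scaleC_minus1)
lemma clinear_diff: "clinear f \<Longrightarrow> f (x - y) = f x - f (y::'a::cvec)"
  by (simp only: clinear_add clinear_minus diff_conv_add_uminus)

lemma bounded_linear_cinner_right: "bounded_linear (cinner (x::'a::complex_inner))"
proof (rule bounded_linear_intro[where K="norm x"])
  show "cinner x (y + z) = cinner x y + cinner x z" for y z by (rule cinner_add_right)
  show "cinner x (r *\<^sub>R y) = r *\<^sub>R cinner x y" for r y
    by (simp add: scaleR_scaleC cinner_scaleC_right scaleR_conv_of_real)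
  show "norm (cinner x y) \<le> norm y * norm x" for y using cinner_cauchy[of x y] by (simp add: mult.commute)
qed

lemma bounded_linear_scaleC: "bounded_linear (\<lambda>x::'a::complex_inner. c *\<^sub>C x)"
proof (rule bounded_linear_intro[where K="cmod c"])
  show "c *\<^sub>C (y + z) = c *\<^sub>C y + c *\<^sub>C z" for y z :: 'a by (rule scaleC_add_right)
  show "c *\<^sub>C (r *\<^sub>R y) = r *\<^sub>R (c *\<^sub>C y)" for r and y :: 'a by (simp add: scaleC_scaleR)
  show "norm (c *\<^sub>C y) \<le> norm y * cmod c" for y :: 'a by (simp add: norm_scaleC mult.commute)
qed

lemma riesz_real:
  fixes g :: "'a::{real_inner,complete_space} \<Rightarrow> real"
  assumes bl: "bounded_linear g"
  shows "\<exists>w. \<forall>x. g x = inner w x"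
proof (cases "\<forall>x. g x = 0")
  case True thus ?thesis by (intro exI[of _ 0]) simp
next
  case False
  then obtain z0 where z0: "g z0 \<noteq> 0" by auto
  interpret g: bounded_linear g by fact
  define z where "z = (1 / g z0) *\<^sub>R z0"
  have gz: "g z = 1" using z0 by (simp add: z_def g.scaleR)
  define M where "M = {x. g x = 0}"
  define D where "D = (\<lambda>x. norm (z - x)) ` M"
  define d where "d = Inf D"
  have "0 \<in> M" by (simp add: M_def g.zero)
  have Dne: "D \<noteq> {}" using \<open>0\<in>M\<close> by (auto simp: D_def)
  have Dbdd: "bdd_below D" by (auto simp: D_def intro!: bdd_belowI[of _ 0])
  have dle: "d \<le> norm (z - x)" if "x \<in> M" for x
    using that Dbdd by (auto simp: d_def D_def intro!: cInf_lower)
  have d0: "0 \<le> d" using Dne by (auto simp: d_def D_def intro!: cInf_greatest)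
  have "\<exists>x\<in>M. norm (z - x) < d + 1 / Suc n" for n
  proof -
    have "Inf D < d + 1/Suc n" by (simp add: d_def)
    from cInf_lessD[OF Dne this] show ?thesis by (auto simp: D_def)
  qed
  then obtain xs where xsM: "\<And>n. xs n \<in> M" and xsd: "\<And>n. norm (z - xs n) < d + 1 / Suc n"
    by metis
  have sq: "(norm (z - xs n))\<^sup>2 \<le> d\<^sup>2 + (2*d+1) / Suc n" for n
  proof -
    define e where "e = 1 / real (Suc n)"
    have e0: "0 < e" "e \<le> 1" by (auto simp: e_def)
    have "(norm (z - xs n))\<^sup>2 \<le> (d + e)\<^sup>2"
      using xsd[of n] by (intro power_mono) (auto simp: e_def)
    also have "\<dots> = d\<^sup>2 + 2*d*e + e*e" by (simp add: power2_eq_square algebra_simps)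
    also have "\<dots> \<le> d\<^sup>2 + 2*d*e + e" using e0 by (simp add: mult_left_le_one_le)
    also have "\<dots> = d\<^sup>2 + (2*d+1) / Suc n" by (simp add: e_def add_divide_distrib)
    finally show ?thesis .
  qed
  have par: "(norm (xs m - xs n))\<^sup>2 \<le> 2*((2*d+1)/Suc m) + 2*((2*d+1)/Suc n)" for m n
  proof -
    let ?a = "z - xs m" and ?b = "z - xs n"
    have mid: "(1/2) *\<^sub>R (xs m + xs n) \<in> M" using xsM[of m] xsM[of n] by (simp add: M_def g.add g.scaleR)
    have "d \<le> norm (z - (1/2) *\<^sub>R (xs m + xs n))" by (rule dle[OF mid])
    moreover have "?a + ?b = 2 *\<^sub>R (z - (1/2) *\<^sub>R (xs m + xs n))" by (simp add: algebra_simps scaleR_2)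
    ultimately have "2 * d \<le> norm (?a + ?b)" by simp
    hence "(2*d)\<^sup>2 \<le> (norm (?a + ?b))\<^sup>2" using d0 by (intro power_mono) auto
    hence h1: "4*d\<^sup>2 \<le> (norm (?a + ?b))\<^sup>2" by (simp add: power_mult_distrib)
    have paral: "(norm (?a + ?b))\<^sup>2 + (norm (?a - ?b))\<^sup>2 = 2*(norm ?a)\<^sup>2 + 2*(norm ?b)\<^sup>2"
      by (simp add: power2_norm_eq_inner inner_add_left inner_add_right inner_diff_left inner_diff_right inner_commute)
    have "?a - ?b = - (xs m - xs n)" by simp
    hence "norm (?a - ?b) = norm (xs m - xs n)" by (simp only: norm_minus_cancel)
    with paral have p2: "(norm (?a + ?b))\<^sup>2 + (norm (xs m - xs n))\<^sup>2 = 2*(norm ?a)\<^sup>2 + 2*(norm ?b)\<^sup>2" by simp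
    from p2 h1 sq[of m] sq[of n] show ?thesis by linarith
  qed
  have "Cauchy xs"
  proof (rule CauchyI)
    fix e :: real assume e: "0 < e"
    obtain N where N0: "4*(2*d+1) / e\<^sup>2 < real N" using reals_Archimedean2 by blast
    have "4*(2*d+1) < e\<^sup>2 * real N" using N0 e by (simp add: pos_divide_less_eq mult.commute)
    also have "\<dots> \<le> e\<^sup>2 * real (Suc N)" using e by (intro mult_left_mono) auto
    finally have N: "4*(2*d+1) / real (Suc N) < e\<^sup>2" by (simp add: pos_divide_less_eq mult.commute)
    have "norm (xs m - xs n) < e" if "m \<ge> N" "n \<ge> N" for m n
    proof -
      have "(2*d+1) / real (Suc m) \<le> (2*d+1) / Suc N" "(2*d+1) / real (Suc n) \<le> (2*d+1) / Suc N"
        using that d0 by (auto intro!: divide_left_mono)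
      hence "(norm (xs m - xs n))\<^sup>2 \<le> 4*(2*d+1) / Suc N" using par[of m n] by linarith
      also have "\<dots> < e\<^sup>2" by (rule N)
      finally show ?thesis using e by (simp add: power2_less_imp_less)
    qed
    thus "\<exists>M. \<forall>m\<ge>M. \<forall>n\<ge>M. norm (xs m - xs n) < e" by blast
  qed
  then obtain m where lim: "xs \<longlonglongrightarrow> m" using Cauchy_convergent_iff convergent_def by blast
  have "(\<lambda>n. g (xs n)) \<longlonglongrightarrow> g m" by (rule g.tendsto[OF lim])
  moreover have "(\<lambda>n. g (xs n)) = (\<lambda>n. 0)" using xsM by (auto simp: M_def)
  ultimately have gm: "g m = 0" using LIMSEQ_unique tendsto_const by metis
  have nm: "norm (z - m) \<le> d"
  proof (rule LIMSEQ_le)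
    show "(\<lambda>n. norm (z - xs n)) \<longlonglongrightarrow> norm (z - m)" by (intro tendsto_intros lim)
    show "(\<lambda>n. d + 1 / real (Suc n)) \<longlonglongrightarrow> d"
      using tendsto_add[OF tendsto_const LIMSEQ_inverse_real_of_nat, of d] by (simp add: inverse_eq_divide)
    show "\<exists>N. \<forall>n\<ge>N. norm (z - xs n) \<le> d + 1 / real (Suc n)" using xsd less_imp_le by blast
  qed
  define u where "u = z - m"
  have gu: "g u = 1" by (simp add: u_def g.diff gz gm)
  have orth: "inner u x = 0" if x: "x \<in> M" for x
  proof -
    have key: "2 * t * inner u x \<le> t\<^sup>2 * (norm x)\<^sup>2" for t
    proof -
      have "m + t *\<^sub>R x \<in> M" using gm x by (simp add: M_def g.add g.scaleR)
      hence "d \<le> norm (z - (m + t *\<^sub>R x))" by (rule dle)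
      hence "norm u \<le> norm (u - t *\<^sub>R x)" using nm by (simp add: u_def algebra_simps)
      hence "(norm u)\<^sup>2 \<le> (norm (u - t *\<^sub>R x))\<^sup>2" by (simp add: power_mono)
      moreover have "(norm (u - t *\<^sub>R x))\<^sup>2 = (norm u)\<^sup>2 - 2*t*inner u x + t\<^sup>2*(norm x)\<^sup>2"
        unfolding power2_norm_eq_inner
        by (simp add: inner_diff_left inner_diff_right inner_commute[of x u] algebra_simps power2_eq_square)
      ultimately show ?thesis by linarith
    qed
    define a where "a = inner u x"
    define b where "b = (norm x)\<^sup>2"
    have b0: "0 \<le> b" by (simp add: b_def)
    define t where "t = a/(b+1)"
    have at: "a = t * (b+1)" using b0 by (simp add: t_def)
    have k1: "2 * t * a \<le> t\<^sup>2 * b" using key[of t] by (simp add: a_def b_def)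
    have "t * t * (b + 2) = 2 * t * a - t\<^sup>2 * b" by (simp add: at power2_eq_square algebra_simps)
    hence tt: "t * t * (b + 2) \<le> 0" using k1 by linarith
    moreover have "0 < b + 2" using b0 by simp
    with tt have "t * t \<le> 0" by (auto simp: mult_le_0_iff)
    hence "t = 0" by (auto simp: mult_le_0_iff)
    thus ?thesis using at by (simp add: a_def)
  qed
  have "u \<noteq> 0" using gu g.zero by auto
  hence uu: "inner u u \<noteq> 0" by simp
  define w where "w = (1 / inner u u) *\<^sub>R u"
  have "g x = inner w x" for x
  proof -
    have "x - g x *\<^sub>R u \<in> M" by (simp add: M_def g.diff g.scaleR gu)
    hence "inner u (x - g x *\<^sub>R u) = 0" by (rule orth)
    hence "inner u x = g x * inner u u" by (simp add: inner_diff_right)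
    thus ?thesis using uu by (simp add: w_def)
  qed
  thus ?thesis by blast
qed

lemma adjoint_exists:
  fixes a :: "'h::chilbert \<Rightarrow> 'h"
  assumes ca: "clinear a" and ba: "bounded_linear a"
  shows "\<exists>b. \<forall>x y. cinner (a x) y = cinner x (b y)"
proof -
  have "\<exists>w. \<forall>x. inner (a x) y = inner w x" for y
    by (rule riesz_real) (rule bounded_linear_compose[OF bounded_linear_inner_left ba])
  then obtain b where b: "\<And>x y. inner (a x) y = inner (b y) x" by metis
  show ?thesis
  proof (intro exI allI)
    fix x y
    show "cinner (a x) y = cinner x (b y)"
    proof (rule complex_eqI)
      show "Re (cinner (a x) y) = Re (cinner x (b y))"
        by (simp only: Re_cinner b) (rule inner_commute)
      have "Im (cinner (a x) y) = Re (cinner (a (\<i> *\<^sub>C x)) y)"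
        by (simp add: Im_cinner clinear_scaleC[OF ca])
      also have "\<dots> = Re (cinner (\<i> *\<^sub>C x) (b y))" by (simp only: Re_cinner b) (rule inner_commute)
      also have "\<dots> = Im (cinner x (b y))" by (simp add: Im_cinner)
      finally show "Im (cinner (a x) y) = Im (cinner x (b y))" .
    qed
  qed
qed

lemma adjoint_unique:
  assumes ab: "\<forall>x y. cinner (a x) y = cinner x (b y)"
  shows "adjoint a = (b::'h::chilbert \<Rightarrow> 'h)"
  unfolding adjoint_def
proof (rule the_equality)
  show "\<forall>x y. cinner (a x) y = cinner x (b y)" by fact
  fix g assume g: "\<forall>x y. cinner (a x) y = cinner x (g y)"
  show "g = b"
  proof (rule ext, rule cinner_ext)
    fix y k
    have "cinner k (g y) = cinner (a k) y" using g by simp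
    also have "\<dots> = cinner k (b y)" using ab by simp
    finally show "cinner k (g y) = cinner k (b y)" .
  qed
qed

lemma adjoint_prop:
  assumes "clinear a" "bounded_linear (a::'h::chilbert \<Rightarrow> 'h)"
  shows "cinner (a x) y = cinner x (adjoint a y)"
proof -
  obtain b where b: "\<forall>x y. cinner (a x) y = cinner x (b y)" using adjoint_exists[OF assms] by blast
  have e: "adjoint a = b" by (rule adjoint_unique[OF b])
  show ?thesis unfolding e using b by blast
qed

lemma positive_Im: "positive_op p \<Longrightarrow> Im (cinner z (p z)) = 0"
  unfolding positive_op_def by (simp add: complex_is_Real_iff)

lemma positive_Re: "positive_op p \<Longrightarrow> 0 \<le> Re (cinner z (p z))"
  unfolding positive_op_def by simp

lemma positive_selfadj:
  assumes cp: "clinear p" and pp: "positive_op p"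
  shows "cinner (p x) y = cinner x (p (y::'h::chilbert))"
proof -
  define B where "B u v = cinner u (p v)" for u v
  have e1: "B (x+y) (x+y) = B x x + B x y + B y x + B y y"
    by (simp add: B_def clinear_add[OF cp] cinner_add_left cinner_add_right)
  have e2: "B (x + \<i> *\<^sub>C y) (x + \<i> *\<^sub>C y) = B x x + \<i> * B x y - \<i> * B y x + B y y"
    by (simp add: B_def clinear_add[OF cp] clinear_scaleC[OF cp] cinner_add_left cinner_add_right
        cinner_scaleC_left cinner_scaleC_right algebra_simps)
  have r: "Im (B z z) = 0" for z using positive_Im[OF pp] by (simp add: B_def)
  from e1 r[of "x+y"] r[of x] r[of y] have i1: "Im (B x y) + Im (B y x) = 0" by simp
  from e2 r[of "x + \<i> *\<^sub>C y"] r[of x] r[of y] have i2: "Re (B x y) - Re (B y x) = 0" by simp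
  have "B y x = cnj (B x y)" using i1 i2 by (simp add: complex_eq_iff)
  moreover have "cinner (p x) y = cnj (B y x)" by (simp add: B_def cinner_commute[of "p x"])
  ultimately show ?thesis by (simp add: B_def)
qed

lemma positive_adjoint: "clinear p \<Longrightarrow> positive_op p \<Longrightarrow> adjoint p = (p::'h::chilbert \<Rightarrow> 'h)"
  by (rule adjoint_unique) (simp add: positive_selfadj)

definition sc :: "nat \<Rightarrow> real" where "sc n = (-1)^n * ((1/2) gchoose n)"

lemma sc_pochhammer: "sc n = pochhammer (-1/2) n / fact n"
  by (simp add: sc_def gbinomial_pochhammer)

lemma sc_0[simp]: "sc 0 = 1" by (simp add: sc_def)

lemma sc_nonpos: "n \<ge> 1 \<Longrightarrow> sc n \<le> 0"
proof -
  assume "n \<ge> 1"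
  then obtain k where k: "n = Suc k" by (cases n) auto
  have "pochhammer (-1/2::real) (Suc k) = (-1/2) * pochhammer (1/2) k"
    by (simp add: pochhammer_rec)
  moreover have "0 < pochhammer (1/2::real) k" by (rule pochhammer_pos) simp
  ultimately have "pochhammer (-1/2::real) (Suc k) \<le> 0" by simp
  thus ?thesis by (simp add: sc_pochhammer k divide_nonpos_pos)
qed

lemma sc_partial: "0 \<le> (\<Sum>k\<le>n. sc k)"
proof -
  have "(\<Sum>k\<le>n. sc k) = (\<Sum>k\<le>n. ((1/2::real) gchoose k) * (-1)^k)"
    by (simp add: sc_def mult.commute)
  also have "\<dots> = (-1)^n * ((1/2 - 1) gchoose n)" by (rule gbinomial_sum_lower_neg)
  also have "\<dots> = pochhammer (1/2) n / fact n"
    by (simp add: gbinomial_pochhammer)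
  also have "\<dots> \<ge> 0" by (simp add: pochhammer_pos less_imp_le)
  finally show ?thesis .
qed

lemma sc_abs_partial: "(\<Sum>k\<le>n. \<bar>sc k\<bar>) \<le> 2"
proof (induction n)
  case 0 thus ?case by simp
next
  case (Suc n)
  have "(\<Sum>k\<le>Suc n. \<bar>sc k\<bar>) = (\<Sum>k\<le>Suc n. (if k = 0 then 2 else 0) - sc k)"
    by (intro sum.cong) (auto simp: abs_of_nonpos sc_nonpos)
  also have "\<dots> = 2 - (\<Sum>k\<le>Suc n. sc k)" by (simp add: sum_subtractf)
  also have "\<dots> \<le> 2" using sc_partial[of "Suc n"] by simp
  finally show ?case .
qed

lemma summable_sc_abs: "summable (\<lambda>n. \<bar>sc n\<bar>)"
  by (rule bounded_imp_summable[where B = 2]) (simp_all add: sc_abs_partial)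

lemma sc_cauchy: "(\<Sum>k\<le>N. sc k * sc (N - k)) = (if N = 0 then 1 else if N = 1 then -1 else 0)"
proof -
  have "(\<Sum>k\<le>N. sc k * sc (N - k)) = (\<Sum>k\<le>N. (-1)^N * (((1/2::real) gchoose k) * ((1/2) gchoose (N - k))))"
  proof (rule sum.cong[OF refl])
    fix k assume "k \<in> {..N}"
    hence e: "(-1::real)^k * (-1)^(N-k) = (-1)^N" by (simp add: power_add[symmetric])
    have "sc k * sc (N - k) = ((-1::real)^k * (-1)^(N-k)) * (((1/2::real) gchoose k) * ((1/2) gchoose (N - k)))"
      by (simp add: sc_def mult_ac)
    thus "sc k * sc (N - k) = (-1)^N * (((1/2::real) gchoose k) * ((1/2) gchoose (N - k)))" by (simp only: e)
  qed
  also have "\<dots> = (-1)^N * (\<Sum>k\<le>N. ((1/2::real) gchoose k) * ((1/2) gchoose (N - k)))"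
    by (simp add: sum_distrib_left)
  also have "\<dots> = (-1)^N * ((1::real) gchoose N)"
    using gbinomial_Vandermonde[of "1/2::real" "1/2" N] by (simp add: atLeast0AtMost)
  also have "((1::real) gchoose N) = of_nat (1 choose N)"
    using binomial_gbinomial[of 1 N, where 'a=real] by simp
  finally show ?thesis by (cases N) (auto simp: binomial_eq_0)
qed

lemma infsum_suminf_norm:
  fixes f :: "nat \<Rightarrow> 'a::banach"
  assumes "summable (\<lambda>n. norm (f n))"
  shows "infsum f UNIV = suminf f"
  by (rule infsumI, rule norm_summable_imp_has_sum[OF assms summable_sums[OF summable_norm_cancel[OF assms]]])

lemma summable_on_nonneg_real:
  fixes g :: "nat \<Rightarrow> real"
  assumes "summable g" "\<And>n. 0 \<le> g n"
  shows "g summable_on UNIV"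
  using assms by (intro norm_summable_imp_summable_on) simp

lemma cauchy_vec:
  fixes a b :: "nat \<Rightarrow> real" and v :: "nat \<Rightarrow> 'a::banach"
  assumes sa: "summable (\<lambda>n. \<bar>a n\<bar>)" and sb: "summable (\<lambda>n. \<bar>b n\<bar>)"
    and bv: "\<And>n. norm (v n) \<le> K"
  shows "(\<Sum>m. a m *\<^sub>R (\<Sum>n. b n *\<^sub>R v (m+n))) = (\<Sum>N. (\<Sum>k\<le>N. a k * b (N - k)) *\<^sub>R v N)"
proof -
  have K0: "0 \<le> K" using bv[of 0] norm_ge_zero order.trans by blast
  define f where "f = (\<lambda>(m,n). (a m * b n) *\<^sub>R v (m+n))"
  define g where "g = (\<lambda>(m::nat,n::nat). \<bar>a m\<bar> * (\<bar>b n\<bar> * K))"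
  have sbK: "(\<lambda>n. \<bar>b n\<bar> * K) summable_on UNIV"
    by (rule summable_on_nonneg_real) (auto intro: summable_mult2 sb K0 mult_nonneg_nonneg)
  define S where "S = infsum (\<lambda>n. \<bar>b n\<bar> * K) UNIV"
  have S0: "0 \<le> S" unfolding S_def by (rule infsum_nonneg) (simp add: K0)
  have gs: "(\<lambda>x. norm (g x)) summable_on UNIV"
  proof -
    have "(\<lambda>x. norm (g x)) summable_on Sigma UNIV (\<lambda>_. UNIV)"
    proof (subst Infinite_Sum.abs_summable_on_Sigma_iff, intro conjI ballI)
      fix m :: nat
      show "(\<lambda>n. norm (g (m, n))) summable_on UNIV"
        using summable_on_cmult_right[OF sbK, of "\<bar>a m\<bar>"] by (simp add: g_def K0 abs_mult)
    next
      have eq: "infsum (\<lambda>n. norm (g (m, n))) UNIV = \<bar>a m\<bar> * S" for m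
        by (simp add: g_def K0 abs_mult S_def infsum_cmult_right')
      have "(\<lambda>m. norm (\<bar>a m\<bar> * S)) summable_on UNIV"
        using S0 by (intro summable_on_nonneg_real) (auto intro: summable_mult2 sa)
      thus "(\<lambda>m. norm (infsum (\<lambda>n. norm (g (m, n))) UNIV)) summable_on UNIV" by (simp only: eq)
    qed
    thus ?thesis by simp
  qed
  have fabs: "(\<lambda>x. norm (f x)) summable_on UNIV"
  proof (rule Infinite_Sum.abs_summable_on_comparison_test[OF gs])
    fix x :: "nat \<times> nat"
    obtain m n where x: "x = (m,n)" by (cases x)
    have "norm (f x) = \<bar>a m\<bar> * \<bar>b n\<bar> * norm (v (m+n))" by (simp add: f_def x abs_mult)
    also have "\<dots> \<le> \<bar>a m\<bar> * \<bar>b n\<bar> * K" by (intro mult_left_mono bv) simp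
    also have "\<dots> = norm (g x)" by (simp add: g_def x K0 abs_mult)
    finally show "norm (f x) \<le> norm (g x)" .
  qed
  hence fs: "f summable_on UNIV" by (rule abs_summable_summable)
  have bsum: "summable (\<lambda>n. norm (b n *\<^sub>R v (m+n)))" for m
    by (rule summable_comparison_test[OF _ summable_mult2[OF sb, of K]]) (auto intro!: mult_left_mono bv)
  have bnorm: "norm (\<Sum>n. b n *\<^sub>R v (m+n)) \<le> (\<Sum>n. \<bar>b n\<bar> * K)" for m
  proof -
    have "norm (\<Sum>n. b n *\<^sub>R v (m+n)) \<le> (\<Sum>n. norm (b n *\<^sub>R v (m+n)))" by (rule summable_norm[OF bsum])
    also have "\<dots> \<le> (\<Sum>n. \<bar>b n\<bar> * K)"
      using bsum[of m] by (intro suminf_le) (auto intro!: mult_left_mono bv summable_mult2 sb)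
    finally show ?thesis .
  qed
  define T where "T = (\<Sum>n. \<bar>b n\<bar> * K)"
  have inner: "a m *\<^sub>R (\<Sum>n. b n *\<^sub>R v (m+n)) = infsum (\<lambda>n. f (m,n)) UNIV" for m
  proof -
    have "(\<Sum>n. b n *\<^sub>R v (m+n)) = infsum (\<lambda>n. b n *\<^sub>R v (m+n)) UNIV"
      by (rule infsum_suminf_norm[symmetric, OF bsum])
    hence "a m *\<^sub>R (\<Sum>n. b n *\<^sub>R v (m+n)) = infsum (\<lambda>n. a m *\<^sub>R (b n *\<^sub>R v (m+n))) UNIV"
      by (simp only: infsum_scaleR_right)
    thus ?thesis by (simp add: f_def)
  qed
  have "(\<Sum>m. a m *\<^sub>R (\<Sum>n. b n *\<^sub>R v (m+n))) = infsum (\<lambda>m. a m *\<^sub>R (\<Sum>n. b n *\<^sub>R v (m+n))) UNIV"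
  proof (rule infsum_suminf_norm[symmetric])
    show "summable (\<lambda>m. norm (a m *\<^sub>R (\<Sum>n. b n *\<^sub>R v (m+n))))"
      by (rule summable_comparison_test[OF _ summable_mult2[OF sa, of T]])
         (auto simp: T_def intro!: mult_left_mono bnorm)
  qed
  also have "\<dots> = infsum (\<lambda>m. infsum (\<lambda>n. f (m,n)) UNIV) UNIV" by (simp only: inner)
  also have "\<dots> = infsum f (Sigma UNIV (\<lambda>_. UNIV))"
    by (rule infsum_Sigma_banach) (simp add: fs)
  also have "\<dots> = infsum f UNIV" by simp
  finally have L: "(\<Sum>m. a m *\<^sub>R (\<Sum>n. b n *\<^sub>R v (m+n))) = infsum f UNIV" .
  define h where "h = (\<lambda>(N::nat,k::nat). (k, N - k))"
  define SS where "SS = Sigma (UNIV::nat set) (\<lambda>N. {..N})"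
  have bij: "bij_betw h SS UNIV"
  proof (rule bij_betwI[where g = "\<lambda>(m,n). (m+n, m)"])
    show "h \<in> SS \<rightarrow> UNIV" by simp
    show "(\<lambda>(m,n). (m+n, m)) \<in> UNIV \<rightarrow> SS" by (auto simp: SS_def)
    show "(case h x of (m, n) \<Rightarrow> (m + n, m)) = x" if "x \<in> SS" for x
      using that by (auto simp: SS_def h_def)
    show "h (case y of (m, n) \<Rightarrow> (m + n, m)) = y" if "y \<in> UNIV" for y
      by (auto simp: h_def split: prod.splits)
  qed
  have fhs: "(\<lambda>x. f (h x)) summable_on SS" using summable_on_reindex_bij_betw[OF bij, of f] fs by blast
  have "infsum f UNIV = infsum (\<lambda>x. f (h x)) SS" by (rule infsum_reindex_bij_betw[OF bij, symmetric])
  also have "\<dots> = infsum (\<lambda>N. infsum (\<lambda>k. f (h (N,k))) {..N}) UNIV"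
    unfolding SS_def by (rule infsum_Sigma_banach[symmetric]) (use fhs SS_def in simp)
  also have "\<dots> = infsum (\<lambda>N. (\<Sum>k\<le>N. a k * b (N - k)) *\<^sub>R v N) UNIV"
  proof (rule infsum_cong)
    fix N
    have "infsum (\<lambda>k. f (h (N,k))) {..N} = (\<Sum>k\<le>N. f (h (N,k)))" by simp
    also have "\<dots> = (\<Sum>k\<le>N. (a k * b (N - k)) *\<^sub>R v N)"
      by (rule sum.cong) (auto simp: f_def h_def)
    also have "\<dots> = (\<Sum>k\<le>N. a k * b (N - k)) *\<^sub>R v N" by (simp add: scaleR_sum_left)
    finally show "infsum (\<lambda>k. f (h (N,k))) {..N} = (\<Sum>k\<le>N. a k * b (N - k)) *\<^sub>R v N" .
  qed
  also have "\<dots> = (\<Sum>N. (\<Sum>k\<le>N. a k * b (N - k)) *\<^sub>R v N)"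
  proof (rule infsum_suminf_norm)
    have cs: "summable (\<lambda>N. \<Sum>k\<le>N. \<bar>a k\<bar> * \<bar>b (N - k)\<bar>)"
      using summable_Cauchy_product[of "\<lambda>n. \<bar>a n\<bar>" "\<lambda>n. \<bar>b n\<bar>"] sa sb by simp
    show "summable (\<lambda>N. norm ((\<Sum>k\<le>N. a k * b (N - k)) *\<^sub>R v N))"
    proof (rule summable_comparison_test[OF _ summable_mult2[OF cs, of K]], intro exI allI impI)
      fix N :: nat
      have "norm ((\<Sum>k\<le>N. a k * b (N - k)) *\<^sub>R v N) = \<bar>\<Sum>k\<le>N. a k * b (N - k)\<bar> * norm (v N)" by simp
      also have "\<dots> \<le> (\<Sum>k\<le>N. \<bar>a k\<bar> * \<bar>b (N - k)\<bar>) * K"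
        by (rule mult_mono) (auto intro: order.trans[OF sum_abs] simp: abs_mult bv sum_nonneg)
      finally show "norm (norm ((\<Sum>k\<le>N. a k * b (N - k)) *\<^sub>R v N)) \<le> (\<Sum>k\<le>N. \<bar>a k\<bar> * \<bar>b (N - k)\<bar>) * K" by simp
    qed
  qed
  finally show ?thesis using L by simp
qed

instance chilbert \<subseteq> banach ..

lemma clinear_scaleR: "clinear (f::'a::complex_inner \<Rightarrow> 'b::complex_inner) \<Longrightarrow> f (r *\<^sub>R x) = r *\<^sub>R f x"
  by (simp only: scaleR_scaleC clinear_scaleC)

lemma cinner_scaleR_left: "cinner (r *\<^sub>R x) y = complex_of_real r * cinner x (y::'a::complex_inner)"
  by (simp only: scaleR_scaleC cinner_scaleC_left complex_cnj_complex_of_real)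

lemma cinner_scaleR_right: "cinner x (r *\<^sub>R y) = complex_of_real r * cinner x (y::'a::complex_inner)"
  by (simp only: scaleR_scaleC cinner_scaleC_right)

lemma positive_kernel:
  fixes X :: "'h::chilbert \<Rightarrow> 'h"
  assumes cX: "clinear X" and pX: "positive_op X" and k0: "cinner k (X k) = 0"
  shows "X k = 0"
proof -
  define l where "l = X k"
  have key: "0 \<le> 2 * t * (norm l)\<^sup>2 + t\<^sup>2 * Re (cinner l (X l))" for t :: real
  proof -
    define z where "z = k + t *\<^sub>R l"
    have "0 \<le> Re (cinner z (X z))" by (rule positive_Re[OF pX])
    also have "cinner z (X z) = cinner k (X k) + complex_of_real t * cinner k (X l)
        + complex_of_real t * cinner l (X k) + complex_of_real t * complex_of_real t * cinner l (X l)"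
      by (simp add: z_def clinear_add[OF cX] clinear_scaleR[OF cX] cinner_add_left cinner_add_right
          cinner_scaleR_left cinner_scaleR_right algebra_simps)
    also have "cinner k (X l) = cinner (X k) l" by (rule positive_selfadj[OF cX pX, symmetric])
    also have "cinner (X k) l = complex_of_real ((norm l)\<^sup>2)" by (simp add: l_def cinner_self)
    also have "cinner l (X k) = complex_of_real ((norm l)\<^sup>2)" by (simp add: l_def cinner_self)
    finally show ?thesis using k0 by (simp add: power2_eq_square)
  qed
  define a where "a = (norm l)\<^sup>2"
  define b where "b = Re (cinner l (X l))"
  have b0: "0 \<le> b" using positive_Re[OF pX] by (simp add: b_def)
  define t where "t = - a / (b + 1)"
  have at: "a = - t * (b+1)" using b0 by (simp add: t_def)
  have "0 \<le> 2*t*a + t\<^sup>2*b" using key[of t] by (simp add: a_def b_def)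
  moreover have "2*t*a + t\<^sup>2*b = - (t*t*(b+2))" by (simp add: at power2_eq_square algebra_simps)
  ultimately have tt: "t*t*(b+2) \<le> 0" by linarith
  have "0 < b + 2" using b0 by simp
  with tt have "t * t \<le> 0" by (auto simp: mult_le_0_iff)
  hence "t = 0" by (auto simp: mult_le_0_iff)
  hence "a = 0" using at by simp
  thus ?thesis by (simp add: a_def l_def)
qed

lemma comm_sqrt_unique:
  fixes X Z :: "'h::chilbert \<Rightarrow> 'h"
  assumes cX: "clinear X" and pX: "positive_op X" and cZ: "clinear Z" and pZ: "positive_op Z"
    and comm: "\<And>h. X (Z h) = Z (X h)" and sq: "\<And>h. X (X h) = Z (Z h)"
  shows "X h = Z h"
proof -
  define k where "k = X h - Z h"
  have "X k + Z k = 0"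
    by (simp add: k_def clinear_diff[OF cX] clinear_diff[OF cZ] comm sq)
  hence "cinner k (X k + Z k) = 0" by simp
  hence s: "cinner k (X k) + cinner k (Z k) = 0" by (simp only: cinner_add_right)
  have r1: "0 \<le> Re (cinner k (X k))" "0 \<le> Re (cinner k (Z k))"
    using positive_Re[OF pX] positive_Re[OF pZ] by auto
  have i1: "Im (cinner k (X k)) = 0" "Im (cinner k (Z k)) = 0"
    using positive_Im[OF pX] positive_Im[OF pZ] by auto
  have "Re (cinner k (X k)) + Re (cinner k (Z k)) = 0" using arg_cong[OF s, of Re] by simp
  hence "Re (cinner k (X k)) = 0" "Re (cinner k (Z k)) = 0" using r1 by linarith+
  hence "cinner k (X k) = 0" "cinner k (Z k) = 0" using i1 by (auto simp: complex_eq_iff)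
  hence Xk: "X k = 0" and Zk: "Z k = 0" using positive_kernel cX pX cZ pZ by blast+
  have "cinner k k = cinner k (X h) - cinner k (Z h)" by (simp add: k_def cinner_diff_right)
  also have "\<dots> = cinner (X k) h - cinner (Z k) h"
    by (simp add: positive_selfadj[OF cX pX] positive_selfadj[OF cZ pZ])
  also have "\<dots> = 0" by (simp add: Xk Zk)
  finally have "k = 0" by (simp add: cinner_self_eq_0)
  thus ?thesis by (simp add: k_def)
qed

lemma funpow_clinear: "clinear (Y::'a::cvec \<Rightarrow> 'a) \<Longrightarrow> clinear (Y ^^ n)"
  by (induction n) (simp_all add: clinear_def)

lemma funpow_bl: "bounded_linear (Y::'a::real_normed_vector \<Rightarrow> 'a) \<Longrightarrow> bounded_linear (Y ^^ n)"
proof (induction n)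
  case 0 thus ?case by (simp add: id_def)
next
  case (Suc n)
  have "bounded_linear (\<lambda>x. Y ((Y ^^ n) x))" by (rule bounded_linear_compose[OF Suc.prems Suc.IH[OF Suc.prems]])
  thus ?case by (simp add: o_def)
qed

lemma funpow_selfadj:
  assumes "\<And>x y. cinner ((Y::'a::complex_inner \<Rightarrow> 'a) x) y = cinner x (Y y)"
  shows "cinner ((Y ^^ n) x) y = cinner x ((Y ^^ n) y)"
proof (induction n arbitrary: x y)
  case 0 thus ?case by simp
next
  case (Suc n)
  have "cinner ((Y ^^ Suc n) x) y = cinner (Y ((Y ^^ n) x)) y" by simp
  also have "\<dots> = cinner ((Y ^^ n) x) (Y y)" by (rule assms)
  also have "\<dots> = cinner x ((Y ^^ n) (Y y))" by (rule Suc.IH)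
  also have "(Y ^^ n) (Y y) = (Y ^^ Suc n) y" by (simp add: funpow_swap1)
  finally show ?case .
qed

lemma funpow_norm:
  assumes "\<And>x. norm ((Y::'a::real_normed_vector \<Rightarrow> 'a) x) \<le> norm x"
  shows "norm ((Y ^^ n) x) \<le> norm x"
proof (induction n)
  case 0 thus ?case by simp
next
  case (Suc n) thus ?case using assms[of "(Y ^^ n) x"] by simp
qed

lemma funpow_comm:
  assumes "\<And>x. L ((Y::'a \<Rightarrow> 'a) x) = Y (L x)"
  shows "L ((Y ^^ n) x) = (Y ^^ n) (L x)"
  by (induction n) (simp_all add: assms)

definition rser :: "('h::chilbert \<Rightarrow> 'h) \<Rightarrow> 'h \<Rightarrow> 'h" where
  "rser Y h = (\<Sum>n. sc n *\<^sub>R (Y ^^ n) h)"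

context
  fixes Y :: "'h::chilbert \<Rightarrow> 'h"
  assumes cY: "clinear Y" and bY: "bounded_linear Y" and nY: "\<And>x. norm (Y x) \<le> norm x"
begin

lemma rser_nsummable: "summable (\<lambda>n. norm (sc n *\<^sub>R (Y ^^ n) h))"
  by (rule summable_comparison_test[OF _ summable_mult2[OF summable_sc_abs, of "norm h"]])
     (auto intro!: mult_left_mono funpow_norm nY)

lemma rser_summable: "summable (\<lambda>n. sc n *\<^sub>R (Y ^^ n) h)"
  by (rule summable_norm_cancel[OF rser_nsummable])

lemma rser_commute:
  assumes bL: "bounded_linear L" and cL: "clinear L" and comm: "\<And>x. L (Y x) = Y (L x)"
  shows "L (rser Y h) = rser Y (L h)"
proof -
  have "L (rser Y h) = (\<Sum>n. L (sc n *\<^sub>R (Y ^^ n) h))"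
    unfolding rser_def by (rule bounded_linear.suminf[OF bL rser_summable])
  also have "\<dots> = rser Y (L h)"
    unfolding rser_def by (simp add: clinear_scaleR[OF cL] funpow_comm[where L=L and Y=Y, OF comm])
  finally show ?thesis .
qed

lemma rser_add: "rser Y (x + y) = rser Y x + rser Y y"
  unfolding rser_def
  by (simp add: suminf_add[OF rser_summable rser_summable] clinear_add[OF funpow_clinear[OF cY]] scaleR_add_right)

lemma rser_scaleC: "rser Y (c *\<^sub>C x) = c *\<^sub>C rser Y x"
proof -
  have "c *\<^sub>C rser Y x = (\<Sum>n. c *\<^sub>C (sc n *\<^sub>R (Y ^^ n) x))"
    unfolding rser_def by (rule bounded_linear.suminf[OF bounded_linear_scaleC rser_summable])
  thus ?thesis unfolding rser_def by (simp add: clinear_scaleC[OF funpow_clinear[OF cY]] scaleC_scaleR)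
qed

lemma rser_clinear: "clinear (rser Y)"
  by (simp add: clinear_def rser_add rser_scaleC)

lemma rser_bl: "bounded_linear (rser Y)"
proof (rule bounded_linear_intro[where K = "\<Sum>n. \<bar>sc n\<bar>"])
  show "rser Y (x + y) = rser Y x + rser Y y" for x y by (rule rser_add)
  show "rser Y (r *\<^sub>R x) = r *\<^sub>R rser Y x" for r x by (rule clinear_scaleR[OF rser_clinear])
  show "norm (rser Y x) \<le> norm x * (\<Sum>n. \<bar>sc n\<bar>)" for x
  proof -
    have "norm (rser Y x) \<le> (\<Sum>n. norm (sc n *\<^sub>R (Y ^^ n) x))"
      unfolding rser_def by (rule summable_norm[OF rser_nsummable])
    also have "\<dots> \<le> (\<Sum>n. \<bar>sc n\<bar> * norm x)"
      using rser_nsummable[of x] by (intro suminf_le) (auto intro!: mult_left_mono funpow_norm nY summable_mult2 summable_sc_abs)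
    also have "\<dots> = (\<Sum>n. \<bar>sc n\<bar>) * norm x" by (rule suminf_mult2[OF summable_sc_abs, symmetric])
    also have "\<dots> = norm x * (\<Sum>n. \<bar>sc n\<bar>)" by (rule mult.commute)
    finally show ?thesis .
  qed
qed

lemma rser_bop: "rser Y \<in> bop"
  by (simp add: bop_def rser_clinear rser_bl)

lemma sc_suminf_nonneg: "0 \<le> (\<Sum>n. sc n)"
  using summable_LIMSEQ'[OF summable_rabs_cancel[OF summable_sc_abs]]
  by (rule LIMSEQ_le_const) (auto intro: sc_partial)

lemma rser_pos:
  assumes sY: "\<And>x y. cinner (Y x) y = cinner x (Y y)"
  shows "positive_op (rser Y)"
  unfolding positive_op_def
proof
  fix h
  define r where "r n = cinner h ((Y ^^ n) h)" for n
  have rr: "Im (r n) = 0" for n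
  proof -
    have "r n = cnj (r n)" unfolding r_def
      by (subst cinner_commute, subst funpow_selfadj[OF sY, symmetric]) (rule refl)
    hence "Im (r n) = Im (cnj (r n))" by (rule arg_cong)
    thus ?thesis by simp
  qed
  have rle: "Re (r n) \<le> (norm h)\<^sup>2" for n
  proof -
    have "Re (r n) \<le> cmod (r n)" by (rule complex_Re_le_cmod)
    also have "\<dots> \<le> norm h * norm ((Y ^^ n) h)" unfolding r_def by (rule cinner_cauchy)
    also have "\<dots> \<le> norm h * norm h" by (intro mult_left_mono funpow_norm nY) simp
    finally show ?thesis by (simp add: power2_eq_square)
  qed
  have r0: "Re (r 0) = (norm h)\<^sup>2" by (simp add: r_def cinner_self)
  have e: "cinner h (rser Y h) = (\<Sum>n. complex_of_real (sc n) * r n)"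
  proof -
    have "cinner h (rser Y h) = (\<Sum>n. cinner h (sc n *\<^sub>R (Y ^^ n) h))"
      unfolding rser_def by (rule bounded_linear.suminf[OF bounded_linear_cinner_right rser_summable])
    thus ?thesis by (simp add: r_def cinner_scaleR_right)
  qed
  have cs: "summable (\<lambda>n. complex_of_real (sc n) * r n)"
  proof -
    have "summable (\<lambda>n. cinner h (sc n *\<^sub>R (Y ^^ n) h))"
      by (rule bounded_linear.summable[OF bounded_linear_cinner_right rser_summable])
    thus ?thesis by (simp add: r_def cinner_scaleR_right)
  qed
  have "Im (cinner h (rser Y h)) = (\<Sum>n. Im (complex_of_real (sc n) * r n))"
    unfolding e by (rule Im_suminf[OF cs])
  also have "\<dots> = 0" by (simp add: rr)
  finally have im: "Im (cinner h (rser Y h)) = 0" .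
  have "Re (cinner h (rser Y h)) = (\<Sum>n. Re (complex_of_real (sc n) * r n))"
    unfolding e by (rule Re_suminf[OF cs])
  also have "\<dots> = (\<Sum>n. sc n * Re (r n))" by simp
  also have "\<dots> \<ge> (\<Sum>n. sc n * (norm h)\<^sup>2)"
  proof (rule suminf_le)
    fix n show "sc n * (norm h)\<^sup>2 \<le> sc n * Re (r n)"
    proof (cases "n = 0")
      case True thus ?thesis by (simp add: r0)
    next
      case False
      hence "sc n \<le> 0" by (intro sc_nonpos) simp
      thus ?thesis by (rule mult_left_mono_neg[OF rle])
    qed
    show "summable (\<lambda>n. sc n * (norm h)\<^sup>2)"
      by (rule summable_mult2[OF summable_rabs_cancel[OF summable_sc_abs]])
    have "summable (\<lambda>n. Re (complex_of_real (sc n) * r n))" by (rule bounded_linear.summable[OF bounded_linear_Re cs])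
    thus "summable (\<lambda>n. sc n * Re (r n))" by simp
  qed
  also have "(\<Sum>n. sc n * (norm h)\<^sup>2) = (\<Sum>n. sc n) * (norm h)\<^sup>2"
    by (rule suminf_mult2[OF summable_rabs_cancel[OF summable_sc_abs], symmetric])
  finally have re: "0 \<le> Re (cinner h (rser Y h))" using sc_suminf_nonneg
    by (meson order.trans mult_nonneg_nonneg zero_le_power2)
  show "cinner h (rser Y h) \<in> \<real> \<and> 0 \<le> Re (cinner h (rser Y h))"
    using im re by (simp add: complex_is_Real_iff)
qed

lemma rser_sq: "rser Y (rser Y h) = h - Y h"
proof -
  have bYn: "bounded_linear (Y ^^ m)" for m by (rule funpow_bl[OF bY])
  have "rser Y (rser Y h) = (\<Sum>m. sc m *\<^sub>R (Y ^^ m) (\<Sum>n. sc n *\<^sub>R (Y ^^ n) h))"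
    by (simp add: rser_def)
  also have "\<dots> = (\<Sum>m. sc m *\<^sub>R (\<Sum>n. sc n *\<^sub>R (Y ^^ (m + n)) h))"
  proof -
    have "(Y ^^ m) (\<Sum>n. sc n *\<^sub>R (Y ^^ n) h) = (\<Sum>n. sc n *\<^sub>R (Y ^^ (m + n)) h)" for m
    proof -
      have "(Y ^^ m) (\<Sum>n. sc n *\<^sub>R (Y ^^ n) h) = (\<Sum>n. (Y ^^ m) (sc n *\<^sub>R (Y ^^ n) h))"
        by (rule bounded_linear.suminf[OF bYn rser_summable])
      also have "\<dots> = (\<Sum>n. sc n *\<^sub>R (Y ^^ (m + n)) h)"
        by (simp add: clinear_scaleR[OF funpow_clinear[OF cY]] funpow_add)
      finally show ?thesis .
    qed
    thus ?thesis by simp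
  qed
  also have "\<dots> = (\<Sum>N. (\<Sum>k\<le>N. sc k * sc (N - k)) *\<^sub>R (Y ^^ N) h)"
    by (rule cauchy_vec[OF summable_sc_abs summable_sc_abs, of _ "norm h"]) (rule funpow_norm[OF nY])
  also have "\<dots> = (\<Sum>N. (if N = 0 then 1 else if N = 1 then -1 else 0) *\<^sub>R (Y ^^ N) h)"
    by (simp only: sc_cauchy)
  also have "\<dots> = (\<Sum>N\<in>{0,1}. (if N = 0 then 1 else if N = 1 then -1 else 0) *\<^sub>R (Y ^^ N) h)"
    by (rule suminf_finite) auto
  also have "\<dots> = h - Y h" by simp
  finally show ?thesis .
qed

end

lemma positive_scale:
  assumes "positive_op X" "0 \<le> r"
  shows "positive_op (\<lambda>h. r *\<^sub>R X (h::'h::chilbert))"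
  unfolding positive_op_def
proof
  fix h
  have e: "cinner h (r *\<^sub>R X h) = complex_of_real r * cinner h (X h)" by (rule cinner_scaleR_right)
  have "Im (cinner h (r *\<^sub>R X h)) = 0" using positive_Im[OF assms(1), of h] by (simp add: e)
  moreover have "0 \<le> Re (cinner h (r *\<^sub>R X h))" using positive_Re[OF assms(1), of h] assms(2) by (simp add: e)
  ultimately show "cinner h (r *\<^sub>R X h) \<in> \<real> \<and> 0 \<le> Re (cinner h (r *\<^sub>R X h))"
    by (simp add: complex_is_Real_iff)
qed

lemma clinear_scale: "clinear (X::'h::chilbert \<Rightarrow> 'h) \<Longrightarrow> clinear (\<lambda>h. r *\<^sub>R X h)"
  by (simp add: clinear_def scaleR_add_right scaleC_scaleR)

lemma sqrt_unique:
  fixes A B :: "'h::chilbert \<Rightarrow> 'h"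
  assumes A: "A \<in> bop" "positive_op A" and B: "B \<in> bop" "positive_op B" and AB: "A \<circ> A = B \<circ> B"
  shows "A = B"
proof -
  from A have cA: "clinear A" and bA: "bounded_linear A" by (auto simp: bop_def)
  from B have cB: "clinear B" and bB: "bounded_linear B" by (auto simp: bop_def)
  have AB': "A (A h) = B (B h)" for h using fun_cong[OF AB, of h] by simp
  define M where "M = (onorm A)\<^sup>2 + 1"
  have M0: "0 < M" by (simp add: M_def add_nonneg_pos)
  define s where "s = 1 / M"
  have s0: "0 < s" using M0 by (simp add: s_def)
  have sA1: "s * (onorm A)\<^sup>2 \<le> 1" using M0 by (simp add: s_def M_def field_simps)
  define Y where "Y = (\<lambda>h. h - s *\<^sub>R A (A h))"
  have Y2: "Y h = h - s *\<^sub>R B (B h)" for h by (simp add: Y_def AB')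
  have cY: "clinear Y"
    unfolding clinear_def Y_def
    by (simp add: clinear_add[OF cA] clinear_scaleC[OF cA] scaleC_diff_right scaleC_scaleR scaleR_add_right)
  have bAA: "bounded_linear (\<lambda>h. A (A h))" by (rule bounded_linear_compose[OF bA bA])
  have bY: "bounded_linear Y"
    unfolding Y_def by (intro bounded_linear_sub bounded_linear_ident bounded_linear_compose[OF bounded_linear_scaleR_right bAA])
  have sA: "cinner (A x) y = cinner x (A y)" for x y by (rule positive_selfadj[OF cA A(2)])
  have sY: "cinner (Y x) y = cinner x (Y y)" for x y
    by (simp add: Y_def cinner_diff_left cinner_diff_right cinner_scaleR_left cinner_scaleR_right sA)
  have nY: "norm (Y h) \<le> norm h" for h
  proof -
    define u where "u = A (A h)"
    have ihu: "inner h u = (norm (A h))\<^sup>2"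
    proof -
      have "inner h u = Re (cinner h (A (A h)))" by (simp add: u_def Re_cinner)
      also have "cinner h (A (A h)) = cinner (A h) (A h)" by (simp add: sA)
      finally show ?thesis by (simp add: cinner_self)
    qed
    have nu: "norm u \<le> onorm A * norm (A h)" unfolding u_def by (rule onorm[OF bA])
    have "(norm u)\<^sup>2 \<le> (onorm A * norm (A h))\<^sup>2" using nu by (intro power_mono) auto
    hence "s\<^sup>2 * (norm u)\<^sup>2 \<le> s\<^sup>2 * (onorm A * norm (A h))\<^sup>2" by (rule mult_left_mono) simp
    also have "\<dots> = s * (s * (onorm A)\<^sup>2) * (norm (A h))\<^sup>2" by (simp add: power_mult_distrib power2_eq_square mult_ac)
    also have "\<dots> \<le> s * 1 * (norm (A h))\<^sup>2" using sA1 s0 by (intro mult_right_mono mult_left_mono) auto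
    finally have q: "s\<^sup>2 * (norm u)\<^sup>2 \<le> s * (norm (A h))\<^sup>2" by simp
    have "(norm (Y h))\<^sup>2 = (norm h)\<^sup>2 - 2 * s * inner h u + s\<^sup>2 * (norm u)\<^sup>2"
      unfolding Y_def u_def[symmetric] power2_norm_eq_inner
      by (simp add: inner_diff_left inner_diff_right inner_commute[of u h] algebra_simps power2_eq_square)
    also have "\<dots> \<le> (norm h)\<^sup>2"
    proof -
      have "2 * s * inner h u = 2 * (s * (norm (A h))\<^sup>2)" by (simp add: ihu)
      moreover have "0 \<le> s * (norm (A h))\<^sup>2" using s0 by simp
      ultimately show ?thesis using q by linarith
    qed
    finally show ?thesis by (rule power2_le_imp_le) simp
  qed
  have AY: "A (Y h) = Y (A h)" for h by (simp add: Y_def clinear_diff[OF cA] clinear_scaleR[OF cA])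
  have BY: "B (Y h) = Y (B h)" for h by (simp add: Y2 clinear_diff[OF cB] clinear_scaleR[OF cB])
  define R where "R = rser Y"
  have cR: "clinear R" unfolding R_def by (rule rser_clinear[OF cY bY nY])
  have pR: "positive_op R" unfolding R_def by (rule rser_pos[OF cY bY nY sY])
  have RR: "R (R h) = s *\<^sub>R A (A h)" for h unfolding R_def rser_sq[OF cY bY nY] by (simp add: Y_def)
  define c where "c = 1 / sqrt M"
  have c0: "0 < c" using M0 by (simp add: c_def)
  have cc: "c * c = s" using M0 by (simp add: c_def s_def real_sqrt_mult[symmetric])
  have main: "c *\<^sub>R X h = R h"
    if cX: "clinear X" and bX: "bounded_linear X" and pX: "positive_op X"
      and XY: "\<And>h. X (Y h) = Y (X h)" and XX: "\<And>h. X (X h) = A (A h)" for X h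
  proof -
    define X' where "X' = (\<lambda>h. c *\<^sub>R X h)"
    have cX': "clinear X'" unfolding X'_def by (rule clinear_scale[OF cX])
    have bX': "bounded_linear X'" unfolding X'_def by (rule bounded_linear_compose[OF bounded_linear_scaleR_right bX])
    have pX': "positive_op X'" unfolding X'_def by (rule positive_scale[OF pX]) (use c0 in simp)
    have X'Y: "X' (Y h) = Y (X' h)" for h by (simp add: X'_def XY clinear_scaleR[OF cY])
    have comm: "X' (R h) = R (X' h)" for h unfolding R_def by (rule rser_commute[OF cY bY nY bX' cX' X'Y])
    have sq: "X' (X' h) = R (R h)" for h by (simp add: X'_def clinear_scaleR[OF cX] XX RR cc)
    show ?thesis using comm_sqrt_unique[OF cX' pX' cR pR comm sq] by (simp add: X'_def)
  qed
  have "c *\<^sub>R A h = c *\<^sub>R B h" for h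
    using main[OF cA bA A(2) AY] main[OF cB bB B(2) BY AB'[symmetric]] by simp
  thus ?thesis using c0 by (intro ext) simp
qed

lemma op_abs_pos:
  assumes "P \<in> bop" "positive_op (P::'h::chilbert \<Rightarrow> 'h)"
  shows "op_abs P = P"
proof -
  have cP: "clinear P" using assms(1) by (simp add: bop_def)
  have "op_abs P = op_sqrt (P \<circ> P)" unfolding op_abs_def by (simp add: positive_adjoint[OF cP assms(2)])
  also have "\<dots> = P" unfolding op_sqrt_def
  proof (rule the_equality)
    show "P \<in> bop \<and> positive_op P \<and> P \<circ> P = P \<circ> P" using assms by simp
    fix p assume "p \<in> bop \<and> positive_op p \<and> p \<circ> p = P \<circ> P"
    thus "p = P" using sqrt_unique[of p P] assms by blast
  qed
  finally show ?thesis .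
qed

context
  fixes A :: "('h::chilbert \<Rightarrow> 'h) set" and act :: "'e::cvec \<Rightarrow> ('h \<Rightarrow> 'h) \<Rightarrow> 'e"
    and ip :: "'e \<Rightarrow> 'e \<Rightarrow> ('h \<Rightarrow> 'h)"
  assumes cs: "cstar_subalg A" and hm: "hilbert_module A act ip"
begin

lemma ip_A: "ip x y \<in> A" using hm by (simp add: hilbert_module_def)
lemma ip_bop: "ip x y \<in> bop" using ip_A cs by (auto simp: cstar_subalg_def)
lemma ip_cl: "clinear (ip x y)" using ip_bop by (simp add: bop_def)
lemma ip_bl: "bounded_linear (ip x y)" using ip_bop by (simp add: bop_def)
lemma ip_add_right: "ip x (y + z) = (\<lambda>h. ip x y h + ip x z h)" using hm by (simp add: hilbert_module_def)
lemma ip_scaleC_right: "ip x (c *\<^sub>C y) = (\<lambda>h. c *\<^sub>C ip x y h)" using hm by (simp add: hilbert_module_def)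
lemma ip_act: "a \<in> A \<Longrightarrow> ip x (act y a) = ip x y \<circ> a" using hm by (simp add: hilbert_module_def)
lemma ip_adjoint: "adjoint (ip x y) = ip y x" using hm by (simp add: hilbert_module_def)
lemma ip_pos: "positive_op (ip x x)" using hm by (simp add: hilbert_module_def)
lemma ip_zero_iff: "ip x x = (\<lambda>h. 0) \<longleftrightarrow> x = 0" using hm by (simp add: hilbert_module_def)

lemma ip_adj: "cinner (ip x y h) k = cinner h (ip y x k)"
  using adjoint_prop[OF ip_cl ip_bl, of x y h k] by (simp add: ip_adjoint)

lemma ip_cnj: "cinner k (ip x z h) = cnj (cinner h (ip z x k))"
proof -
  have "cinner k (ip x z h) = cnj (cinner (ip x z h) k)" by (rule cinner_commute)
  also have "cinner (ip x z h) k = cinner h (ip z x k)" by (rule ip_adj)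
  finally show ?thesis .
qed

lemma ip_add_left: "ip (x + y) z = (\<lambda>h. ip x z h + ip y z h)"
proof (rule ext, rule cinner_ext)
  fix h k
  have "cinner k (ip (x + y) z h) = cnj (cinner h (ip z (x + y) k))" by (rule ip_cnj)
  also have "\<dots> = cnj (cinner h (ip z x k)) + cnj (cinner h (ip z y k))"
    by (simp only: ip_add_right cinner_add_right complex_cnj_add)
  also have "\<dots> = cinner k (ip x z h) + cinner k (ip y z h)"
    by (simp only: ip_cnj[of k x z h] ip_cnj[of k y z h])
  also have "\<dots> = cinner k (ip x z h + ip y z h)" by (simp only: cinner_add_right)
  finally show "cinner k (ip (x + y) z h) = cinner k (ip x z h + ip y z h)" .
qed

lemma ip_scaleC_left: "ip (c *\<^sub>C x) z = (\<lambda>h. cnj c *\<^sub>C ip x z h)"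
proof (rule ext, rule cinner_ext)
  fix h k
  have "cinner k (ip (c *\<^sub>C x) z h) = cnj (cinner h (ip z (c *\<^sub>C x) k))" by (rule ip_cnj)
  also have "\<dots> = cnj c * cnj (cinner h (ip z x k))"
    by (simp only: ip_scaleC_right cinner_scaleC_right complex_cnj_mult)
  also have "\<dots> = cnj c * cinner k (ip x z h)"
    by (simp only: ip_cnj[of k x z h])
  also have "\<dots> = cinner k (cnj c *\<^sub>C ip x z h)" by (simp only: cinner_scaleC_right)
  finally show "cinner k (ip (c *\<^sub>C x) z h) = cinner k (cnj c *\<^sub>C ip x z h)" .
qed

lemma ip_minus_right: "ip x (- y) = (\<lambda>h. - ip x y h)"
  using ip_scaleC_right[of x "-1" y] by (simp add: scaleC_minus1)

lemma ip_diff_right: "ip x (y - z) = (\<lambda>h. ip x y h - ip x z h)"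
  by (simp only: diff_conv_add_uminus ip_add_right ip_minus_right)

lemma ip_minus_left: "ip (- x) y = (\<lambda>h. - ip x y h)"
  using ip_scaleC_left[of "-1" x y] by (simp add: scaleC_minus1)

lemma ip_diff_left: "ip (x - y) z = (\<lambda>h. ip x z h - ip y z h)"
  by (simp only: diff_conv_add_uminus ip_add_left ip_minus_left)

lemma ip_zero_left: "ip 0 y = (\<lambda>h. 0)"
  using ip_scaleC_left[of 0 0 y] by simp

lemma ip_zero_right: "ip x 0 = (\<lambda>h. 0)"
  using ip_scaleC_right[of x 0 0] by simp

lemma mnorm_nonneg: "0 \<le> mnorm ip x"
  by (simp add: mnorm_def onorm_pos_le[OF ip_bl])

lemma mnorm_sq: "(mnorm ip x)\<^sup>2 = onorm (ip x x)"
  by (simp add: mnorm_def onorm_pos_le[OF ip_bl])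

lemma mnorm_zero[simp]: "mnorm ip 0 = 0"
  by (simp add: mnorm_def ip_zero_left onorm_zero)

lemma mnorm_eq_0: "mnorm ip x = 0 \<longleftrightarrow> x = 0"
proof
  assume "mnorm ip x = 0"
  hence "onorm (ip x x) = 0" using mnorm_sq[of x] by simp
  hence "ip x x = (\<lambda>h. 0)" using onorm_eq_0[OF ip_bl] by auto
  thus "x = 0" using ip_zero_iff by simp
qed simp

lemma mnorm_scaleC: "mnorm ip (c *\<^sub>C x) = cmod c * mnorm ip x"
proof -
  have "ip (c *\<^sub>C x) (c *\<^sub>C x) = (\<lambda>h. (cmod c)\<^sup>2 *\<^sub>R ip x x h)"
  proof (rule ext)
    fix h
    have "ip (c *\<^sub>C x) (c *\<^sub>C x) h = (cnj c * c) *\<^sub>C ip x x h"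
      by (simp add: ip_scaleC_left ip_scaleC_right scaleC_scaleC mult.commute)
    also have "cnj c * c = complex_of_real ((cmod c)\<^sup>2)" by (simp add: complex_norm_square mult.commute del: of_real_power)
    finally show "ip (c *\<^sub>C x) (c *\<^sub>C x) h = (cmod c)\<^sup>2 *\<^sub>R ip x x h" by (simp only: scaleC_of_real)
  qed
  hence "onorm (ip (c *\<^sub>C x) (c *\<^sub>C x)) = (cmod c)\<^sup>2 * onorm (ip x x)"
    by (simp add: onorm_scaleR[OF ip_bl])
  thus ?thesis by (simp add: mnorm_def real_sqrt_mult)
qed

lemma mnorm_minus: "mnorm ip (- x) = mnorm ip x"
  using mnorm_scaleC[of "-1" x] by (simp add: scaleC_minus1)

lemma cauchy_schwarz_mod: "onorm (ip x y) \<le> mnorm ip x * mnorm ip y"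
proof -
  define P where "P = ip x x"
  define Q where "Q = ip y y"
  define b where "b = ip x y"
  define oP where "oP = onorm P"
  define oQ where "oQ = onorm Q"
  have oP0: "0 \<le> oP" and oQ0: "0 \<le> oQ" by (simp_all add: oP_def oQ_def P_def Q_def onorm_pos_le[OF ip_bl])
  have key: "(norm (b h))\<^sup>2 \<le> oP * oQ * (norm h)\<^sup>2" for h
  proof -
    define u where "u = b h"
    have tk: "0 \<le> t\<^sup>2 * oP * (norm u)\<^sup>2 - 2 * t * (norm u)\<^sup>2 + oQ * (norm h)\<^sup>2" for t :: real
    proof -
      define a where "a = (\<lambda>k. complex_of_real t *\<^sub>C b k)"
      have aA: "a \<in> A" using cs ip_A unfolding a_def b_def cstar_subalg_def by blast
      define z where "z = act x a - y"
      have ah: "a h = t *\<^sub>R u" by (simp add: a_def u_def scaleC_of_real)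
      have e1: "ip z z h = ip z x (a h) - ip z y h"
        by (simp add: z_def ip_diff_right ip_act[OF aA])
      have e2: "ip x z h = P (a h) - u"
        by (simp add: z_def ip_diff_right ip_act[OF aA] P_def u_def b_def)
      have e3: "ip y z h = ip y x (a h) - Q h"
        by (simp add: z_def ip_diff_right ip_act[OF aA] Q_def)
      have "cinner h (ip z z h) = cinner (ip x z h) (a h) - cinner (ip y z h) h"
        by (simp add: e1 cinner_diff_right ip_adj)
      also have "\<dots> = cinner (P (a h)) (a h) - cinner u (a h) - cinner (a h) u + cinner (Q h) h"
        by (simp add: e2 e3 cinner_diff_left ip_adj u_def b_def)
      also have "\<dots> = complex_of_real (t * t) * cinner (P u) u - complex_of_real (2 * t * (norm u)\<^sup>2) + cinner (Q h) h"
        using clinear_scaleR[OF ip_cl, of x x t u]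
        by (simp add: ah P_def cinner_scaleR_left cinner_scaleR_right cinner_self algebra_simps)
      finally have ee: "Re (cinner h (ip z z h)) = t * t * Re (cinner (P u) u) - 2 * t * (norm u)\<^sup>2 + Re (cinner (Q h) h)"
        by simp
      have r0: "0 \<le> Re (cinner h (ip z z h))" by (rule positive_Re[OF ip_pos])
      have r1: "Re (cinner (P u) u) \<le> oP * (norm u)\<^sup>2"
      proof -
        have "Re (cinner (P u) u) \<le> cmod (cinner (P u) u)" by (rule complex_Re_le_cmod)
        also have "\<dots> \<le> norm (P u) * norm u" by (rule cinner_cauchy)
        also have "\<dots> \<le> oP * norm u * norm u" unfolding oP_def P_def
          by (intro mult_right_mono onorm[OF ip_bl]) simp
        finally show ?thesis by (simp add: power2_eq_square mult.assoc)
      qed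
      have r2: "Re (cinner (Q h) h) \<le> oQ * (norm h)\<^sup>2"
      proof -
        have "Re (cinner (Q h) h) \<le> cmod (cinner (Q h) h)" by (rule complex_Re_le_cmod)
        also have "\<dots> \<le> norm (Q h) * norm h" by (rule cinner_cauchy)
        also have "\<dots> \<le> oQ * norm h * norm h" unfolding oQ_def Q_def
          by (intro mult_right_mono onorm[OF ip_bl]) simp
        finally show ?thesis by (simp add: power2_eq_square mult.assoc)
      qed
      have "t * t * Re (cinner (P u) u) \<le> t * t * (oP * (norm u)\<^sup>2)"
        by (rule mult_left_mono[OF r1]) simp
      hence "t * t * Re (cinner (P u) u) \<le> t\<^sup>2 * oP * (norm u)\<^sup>2" by (simp add: power2_eq_square mult.assoc)
      thus ?thesis using r0 ee r2 by linarith
    qed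
    show ?thesis
    proof (cases "oP = 0")
      case True
      show ?thesis
      proof (cases "u = 0")
        case True thus ?thesis using oP0 oQ0 by (simp add: u_def)
      next
        case False
        hence nu: "0 < (norm u)\<^sup>2" by simp
        define t0 where "t0 = (oQ * (norm h)\<^sup>2 + 1) / (2 * (norm u)\<^sup>2)"
        have t1: "2 * t0 * (norm u)\<^sup>2 = oQ * (norm h)\<^sup>2 + 1" using nu by (simp add: t0_def field_simps)
        have t2: "t0\<^sup>2 * oP * (norm u)\<^sup>2 = 0" using \<open>oP = 0\<close> by simp
        have "0 \<le> t0\<^sup>2 * oP * (norm u)\<^sup>2 - 2 * t0 * (norm u)\<^sup>2 + oQ * (norm h)\<^sup>2" by (rule tk)
        hence False using t1 t2 by linarith
        thus ?thesis ..
      qed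
    next
      case False
      hence oPp: "0 < oP" using oP0 by simp
      have "0 \<le> (1/oP)\<^sup>2 * oP * (norm u)\<^sup>2 - 2 * (1/oP) * (norm u)\<^sup>2 + oQ * (norm h)\<^sup>2" by (rule tk)
      also have "(1/oP)\<^sup>2 * oP * (norm u)\<^sup>2 - 2 * (1/oP) * (norm u)\<^sup>2 = - ((norm u)\<^sup>2 / oP)"
        using oPp by (simp add: field_simps power2_eq_square)
      finally have "(norm u)\<^sup>2 / oP \<le> oQ * (norm h)\<^sup>2" by simp
      hence "(norm u)\<^sup>2 \<le> oQ * (norm h)\<^sup>2 * oP" using oPp by (simp add: pos_divide_le_eq)
      thus ?thesis by (simp add: u_def mult_ac)
    qed
  qed
  have "onorm b \<le> sqrt oP * sqrt oQ"
  proof (rule onorm_bound)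
    show "0 \<le> sqrt oP * sqrt oQ" using oP0 oQ0 by simp
    fix h
    have "(norm (b h))\<^sup>2 \<le> (sqrt oP * sqrt oQ * norm h)\<^sup>2"
      using key[of h] oP0 oQ0 by (simp add: power_mult_distrib)
    thus "norm (b h) \<le> sqrt oP * sqrt oQ * norm h"
      by (rule power2_le_imp_le) (simp add: oP0 oQ0)
  qed
  thus ?thesis by (simp add: b_def mnorm_def oP_def oQ_def P_def Q_def)
qed

lemma mnorm_triangle: "mnorm ip (x + y) \<le> mnorm ip x + mnorm ip y"
proof -
  have e: "ip (x + y) (x + y) = (\<lambda>h. (ip x x h + ip x y h) + (ip y x h + ip y y h))"
    by (simp add: ip_add_left ip_add_right add_ac)
  have bl: "bounded_linear (\<lambda>h. ip x x h + ip x y h)" "bounded_linear (\<lambda>h. ip y x h + ip y y h)"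
    by (intro bounded_linear_add ip_bl)+
  have "onorm (ip (x + y) (x + y)) \<le> onorm (\<lambda>h. ip x x h + ip x y h) + onorm (\<lambda>h. ip y x h + ip y y h)"
    unfolding e by (rule onorm_triangle[OF bl])
  also have "\<dots> \<le> (onorm (ip x x) + onorm (ip x y)) + (onorm (ip y x) + onorm (ip y y))"
    by (intro add_mono onorm_triangle ip_bl)
  also have "\<dots> \<le> ((mnorm ip x)\<^sup>2 + mnorm ip x * mnorm ip y) + (mnorm ip y * mnorm ip x + (mnorm ip y)\<^sup>2)"
    by (intro add_mono cauchy_schwarz_mod) (simp_all add: mnorm_sq)
  also have "\<dots> = (mnorm ip x + mnorm ip y)\<^sup>2" by (simp add: power2_eq_square algebra_simps)
  finally have "(mnorm ip (x + y))\<^sup>2 \<le> (mnorm ip x + mnorm ip y)\<^sup>2" by (simp add: mnorm_sq)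
  thus ?thesis by (rule power2_le_imp_le) (simp add: mnorm_nonneg add_nonneg_nonneg)
qed

end

lemma polarization:
  fixes G :: "'e::cvec \<Rightarrow> 'e \<Rightarrow> complex"
  assumes aL: "\<And>u v w. G (u + v) w = G u w + G v w" and sL: "\<And>c u w. G (c *\<^sub>C u) w = cnj c * G u w"
    and aR: "\<And>u v w. G u (v + w) = G u v + G u w" and sR: "\<And>c u w. G u (c *\<^sub>C w) = c * G u w"
  shows "4 * G x y = G (x + y) (x + y) - G (x + (-1) *\<^sub>C y) (x + (-1) *\<^sub>C y)
      - \<i> * G (x + \<i> *\<^sub>C y) (x + \<i> *\<^sub>C y) + \<i> * G (x + (-\<i>) *\<^sub>C y) (x + (-\<i>) *\<^sub>C y)"
  by (simp add: aL sL aR sR algebra_simps)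

context
  fixes A :: "('h::chilbert \<Rightarrow> 'h) set" and act :: "'e::cvec \<Rightarrow> ('h \<Rightarrow> 'h) \<Rightarrow> 'e"
    and ip :: "'e \<Rightarrow> 'e \<Rightarrow> ('h \<Rightarrow> 'h)"
  assumes cs: "cstar_subalg A" and hm: "hilbert_module A act ip"
begin

lemma mop_bound:
  assumes cD: "clinear D" and mD: "mbounded ip D"
  shows "mnorm ip (D z) \<le> mopnorm ip D * mnorm ip z" and "0 \<le> mopnorm ip D"
proof -
  define SS where "SS = {mnorm ip (D x) | x. mnorm ip x \<le> 1}"
  obtain K where K: "\<And>x. mnorm ip (D x) \<le> K * mnorm ip x" using mD by (auto simp: mbounded_def)
  have bdd: "bdd_above SS"
  proof (rule bdd_aboveI)
    fix s assume "s \<in> SS"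
    then obtain x where s: "s = mnorm ip (D x)" and x1: "mnorm ip x \<le> 1" by (auto simp: SS_def)
    have "s \<le> K * mnorm ip x" using K s by simp
    also have "\<dots> \<le> max K 0 * mnorm ip x" by (intro mult_right_mono mnorm_nonneg[OF cs hm]) simp
    also have "\<dots> \<le> max K 0 * 1" by (intro mult_left_mono x1) simp
    finally show "s \<le> max K 0" by simp
  qed
  have D0: "D 0 = 0" by (rule clinear_zero[OF cD])
  have "0 \<in> SS" unfolding SS_def using D0 by (auto intro!: exI[of _ 0] simp: mnorm_zero[OF cs hm])
  hence "0 \<le> Sup SS" using bdd by (rule cSup_upper)
  thus "0 \<le> mopnorm ip D" by (simp add: mopnorm_def SS_def)
  show "mnorm ip (D z) \<le> mopnorm ip D * mnorm ip z"
  proof (cases "mnorm ip z = 0")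
    case True
    hence "z = 0" using mnorm_eq_0[OF cs hm] by simp
    thus ?thesis by (simp add: D0 mnorm_zero[OF cs hm])
  next
    case False
    define m where "m = mnorm ip z"
    have m0: "0 < m" using False mnorm_nonneg[OF cs hm, of z] by (simp add: m_def)
    define z' where "z' = complex_of_real (1/m) *\<^sub>C z"
    have "mnorm ip z' = 1" using m0 by (simp add: z'_def mnorm_scaleC[OF cs hm] m_def[symmetric] norm_divide)
    hence "mnorm ip (D z') \<in> SS" unfolding SS_def by auto
    hence "mnorm ip (D z') \<le> Sup SS" using bdd by (rule cSup_upper)
    moreover have "mnorm ip (D z') = mnorm ip (D z) / m"
      using m0 by (simp add: z'_def clinear_scaleC[OF cD] mnorm_scaleC[OF cs hm] norm_divide)
    ultimately have "mnorm ip (D z) / m \<le> mopnorm ip D" by (simp add: mopnorm_def SS_def)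
    thus ?thesis using m0 by (simp add: m_def pos_divide_le_eq)
  qed
qed

end

theorem corollary2p5:
  fixes \<delta> \<theta> :: real
    and A :: "('h::chilbert \<Rightarrow> 'h) set"
    and act :: "'e::cvec \<Rightarrow> ('h \<Rightarrow> 'h) \<Rightarrow> 'e"
    and ip :: "'e \<Rightarrow> 'e \<Rightarrow> ('h \<Rightarrow> 'h)"
    and S T :: "'e \<Rightarrow> 'e"
  assumes "0 \<le> \<delta>" "\<delta> < 1" "0 \<le> \<theta>" "\<theta> < 1"
    and dimH: "\<exists>u v :: 'h. \<forall>a b. a *\<^sub>C u + b *\<^sub>C v = 0 \<longrightarrow> a = 0 \<and> b = 0"
    and A: "cstar_subalg A" "kop \<subseteq> A"
    and E: "hilbert_module A act ip" "full_module A ip"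
    and S: "clinear S" "mbounded ip S" "S \<noteq> (\<lambda>x. 0)"
    and Siso: "\<forall>x y. op_abs (ip (S x) (S y))
                  = (\<lambda>h. complex_of_real ((mopnorm ip S)\<^sup>2) *\<^sub>C op_abs (ip x y) h)"
    and T: "clinear T"
    and TS: "mbounded ip (\<lambda>x. T x - S x)" "mopnorm ip (\<lambda>x. T x - S x) \<le> \<theta> * mopnorm ip S"
  shows "orth_preserving ip \<delta> ((\<theta>\<^sup>2 + 2 * \<theta> + \<delta>) / (1 - \<theta>)\<^sup>2) T"
proof -
  note cs = A(1) and hm = E(1)
  note mnn = mnorm_nonneg[OF cs hm]
  define N where "N = mopnorm ip S"
  have N0: "0 \<le> N" using mop_bound(2)[OF cs hm S(1) S(2)] by (simp add: N_def)
  have opabs: "op_abs (ip z z) = ip z z" for z by (rule op_abs_pos[OF ip_bop[OF cs hm] ip_pos[OF cs hm]])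
  have Szz: "ip (S z) (S z) = (\<lambda>h. complex_of_real (N\<^sup>2) *\<^sub>C ip z z h)" for z
    using Siso[rule_format, of z z] by (simp add: opabs N_def)
  have Sxy: "ip (S x) (S y) = (\<lambda>h. complex_of_real (N\<^sup>2) *\<^sub>C ip x y h)" for x y
  proof (rule ext, rule cinner_ext)
    fix h k
    define G where "G u v = cinner k (ip u v h)" for u v
    define G' where "G' u v = cinner k (ip (S u) (S v) h)" for u v
    have aL: "G (u + v) w = G u w + G v w" for u v w by (simp add: G_def ip_add_left[OF cs hm] cinner_add_right)
    have sL: "G (c *\<^sub>C u) w = cnj c * G u w" for c u w by (simp add: G_def ip_scaleC_left[OF cs hm] cinner_scaleC_right)
    have aR: "G u (v + w) = G u v + G u w" for u v w by (simp add: G_def ip_add_right[OF cs hm] cinner_add_right)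
    have sR: "G u (c *\<^sub>C w) = c * G u w" for c u w by (simp add: G_def ip_scaleC_right[OF cs hm] cinner_scaleC_right)
    have aL': "G' (u + v) w = G' u w + G' v w" for u v w
      by (simp add: G'_def clinear_add[OF S(1)] ip_add_left[OF cs hm] cinner_add_right)
    have sL': "G' (c *\<^sub>C u) w = cnj c * G' u w" for c u w
      by (simp add: G'_def clinear_scaleC[OF S(1)] ip_scaleC_left[OF cs hm] cinner_scaleC_right)
    have aR': "G' u (v + w) = G' u v + G' u w" for u v w
      by (simp add: G'_def clinear_add[OF S(1)] ip_add_right[OF cs hm] cinner_add_right)
    have sR': "G' u (c *\<^sub>C w) = c * G' u w" for c u w
      by (simp add: G'_def clinear_scaleC[OF S(1)] ip_scaleC_right[OF cs hm] cinner_scaleC_right)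
    have diag: "G' z z = complex_of_real (N\<^sup>2) * G z z" for z
      by (simp add: G'_def G_def Szz cinner_scaleC_right)
    have "4 * G' x y = complex_of_real (N\<^sup>2) * (4 * G x y)"
      unfolding polarization[of G', OF aL' sL' aR' sR'] polarization[of G, OF aL sL aR sR] diag
      by (simp add: algebra_simps)
    hence "G' x y = complex_of_real (N\<^sup>2) * G x y" by simp
    thus "cinner k (ip (S x) (S y) h) = cinner k (complex_of_real (N\<^sup>2) *\<^sub>C ip x y h)"
      by (simp add: G_def G'_def cinner_scaleC_right)
  qed
  have oSxy: "onorm (ip (S x) (S y)) = N\<^sup>2 * onorm (ip x y)" for x y
  proof -
    have "ip (S x) (S y) = (\<lambda>h. N\<^sup>2 *\<^sub>R ip x y h)" by (simp only: Sxy scaleC_of_real)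
    thus ?thesis by (simp add: onorm_scaleR[OF ip_bl[OF cs hm]])
  qed
  have mS: "mnorm ip (S z) = N * mnorm ip z" for z
  proof -
    have "(mnorm ip (S z))\<^sup>2 = N\<^sup>2 * onorm (ip z z)" by (simp add: mnorm_sq[OF cs hm] oSxy)
    also have "\<dots> = (N * mnorm ip z)\<^sup>2" by (simp add: mnorm_sq[OF cs hm] power_mult_distrib)
    finally show ?thesis by (rule power2_eq_imp_eq) (simp_all add: mnn N0)
  qed
  define D where "D = (\<lambda>x. T x - S x)"
  have cD: "clinear D" unfolding D_def clinear_def
    by (simp add: clinear_add[OF T] clinear_add[OF S(1)] clinear_scaleC[OF T] clinear_scaleC[OF S(1)] scaleC_diff_right)
  have mopD: "mopnorm ip D \<le> \<theta> * N" using TS(2) by (simp add: D_def N_def)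
  have mD: "mnorm ip (D z) \<le> \<theta> * N * mnorm ip z" for z
  proof -
    have "mnorm ip (D z) \<le> mopnorm ip D * mnorm ip z"
      by (rule mop_bound(1)[OF cs hm cD]) (simp add: D_def TS(1))
    also have "\<dots> \<le> \<theta> * N * mnorm ip z" by (intro mult_right_mono mopD mnn)
    finally show ?thesis .
  qed
  have TSD: "T z = S z + D z" for z by (simp add: D_def)
  have mTup: "mnorm ip (T z) \<le> (1 + \<theta>) * N * mnorm ip z" for z
  proof -
    have "mnorm ip (T z) \<le> mnorm ip (S z) + mnorm ip (D z)" unfolding TSD by (rule mnorm_triangle[OF cs hm])
    thus ?thesis using mD[of z] by (simp add: mS algebra_simps)
  qed
  have mTlo: "(1 - \<theta>) * N * mnorm ip z \<le> mnorm ip (T z)" for z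
  proof -
    have "S z = T z + (- D z)" by (simp add: D_def)
    hence "mnorm ip (S z) \<le> mnorm ip (T z) + mnorm ip (- D z)" by (metis mnorm_triangle[OF cs hm])
    thus ?thesis using mD[of z] by (simp add: mS mnorm_minus[OF cs hm] algebra_simps)
  qed
  show ?thesis unfolding orth_preserving_def
  proof (intro allI impI)
    fix x y
    assume hxy: "onorm (ip x y) \<le> \<delta> * mnorm ip x * mnorm ip y"
    define mx where "mx = mnorm ip x"
    define my where "my = mnorm ip y"
    have mx0: "0 \<le> mx" and my0: "0 \<le> my" by (simp_all add: mx_def my_def mnn)
    define \<epsilon> where "\<epsilon> = (\<theta>\<^sup>2 + 2 * \<theta> + \<delta>) / (1 - \<theta>)\<^sup>2"
    have e0: "0 \<le> \<epsilon>" using assms(1,3) by (simp add: \<epsilon>_def)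
    have eq1: "ip (T x) (T y) = (\<lambda>h. (ip (S x) (S y) h + ip (S x) (D y) h) + ip (D x) (T y) h)"
    proof -
      have "ip (T x) (T y) = (\<lambda>h. ip (S x) (T y) h + ip (D x) (T y) h)"
        by (simp only: TSD[of x] ip_add_left[OF cs hm])
      moreover have "ip (S x) (T y) = (\<lambda>h. ip (S x) (S y) h + ip (S x) (D y) h)"
        by (simp only: TSD[of y] ip_add_right[OF cs hm])
      ultimately show ?thesis by simp
    qed
    have bl: "bounded_linear (ip u v)" for u v by (rule ip_bl[OF cs hm])
    have "onorm (ip (T x) (T y)) \<le> onorm (\<lambda>h. ip (S x) (S y) h + ip (S x) (D y) h) + onorm (ip (D x) (T y))"
      unfolding eq1 by (rule onorm_triangle[OF bounded_linear_add[OF bl bl] bl])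
    also have "\<dots> \<le> (onorm (ip (S x) (S y)) + onorm (ip (S x) (D y))) + onorm (ip (D x) (T y))"
      by (intro add_mono onorm_triangle bl order_refl)
    also have "\<dots> \<le> (N\<^sup>2 * (\<delta> * mx * my) + (N * mx) * (\<theta> * N * my)) + (\<theta> * N * mx) * ((1 + \<theta>) * N * my)"
    proof (intro add_mono)
      show "onorm (ip (S x) (S y)) \<le> N\<^sup>2 * (\<delta> * mx * my)"
        unfolding oSxy using hxy by (intro mult_left_mono) (simp_all add: mx_def my_def)
      have "onorm (ip (S x) (D y)) \<le> mnorm ip (S x) * mnorm ip (D y)" by (rule cauchy_schwarz_mod[OF cs hm])
      also have "\<dots> \<le> (N * mx) * (\<theta> * N * my)" unfolding mS mx_def my_def
        by (intro mult_left_mono mD) (simp add: N0 mnn)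
      finally show "onorm (ip (S x) (D y)) \<le> (N * mx) * (\<theta> * N * my)" .
      have "onorm (ip (D x) (T y)) \<le> mnorm ip (D x) * mnorm ip (T y)" by (rule cauchy_schwarz_mod[OF cs hm])
      also have "\<dots> \<le> (\<theta> * N * mx) * ((1 + \<theta>) * N * my)" unfolding mx_def my_def
        by (intro mult_mono mD mTup mnn) (use assms(3) N0 mnn in simp)
      finally show "onorm (ip (D x) (T y)) \<le> (\<theta> * N * mx) * ((1 + \<theta>) * N * my)" .
    qed
    also have "\<dots> = (\<theta>\<^sup>2 + 2 * \<theta> + \<delta>) * (N\<^sup>2 * mx * my)" by (simp add: power2_eq_square algebra_simps)
    also have "\<dots> = \<epsilon> * ((1 - \<theta>) * N * mx) * ((1 - \<theta>) * N * my)"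
    proof -
      have "(1 - \<theta>)\<^sup>2 \<noteq> 0" using assms(4) by simp
      hence ee: "\<epsilon> * (1 - \<theta>)\<^sup>2 = \<theta>\<^sup>2 + 2 * \<theta> + \<delta>" by (simp add: \<epsilon>_def)
      have "\<epsilon> * ((1 - \<theta>) * N * mx) * ((1 - \<theta>) * N * my) = (\<epsilon> * (1 - \<theta>)\<^sup>2) * (N\<^sup>2 * mx * my)"
        by (simp add: power2_eq_square mult_ac)
      thus ?thesis by (simp only: ee)
    qed
    also have "\<dots> \<le> \<epsilon> * mnorm ip (T x) * mnorm ip (T y)"
    proof -
      have a: "0 \<le> (1 - \<theta>) * N * mx" using assms(4) N0 mx0 by simp
      have "\<epsilon> * ((1 - \<theta>) * N * mx) \<le> \<epsilon> * mnorm ip (T x)"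
        by (rule mult_left_mono[OF mTlo[of x, folded mx_def] e0])
      moreover have "(1 - \<theta>) * N * my \<le> mnorm ip (T y)" by (rule mTlo[of y, folded my_def])
      ultimately show ?thesis
        by (intro mult_mono) (use e0 a assms(4) N0 my0 mnn mTlo[of x, folded mx_def] in simp_all)
    qed
    finally show "onorm (ip (T x) (T y)) \<le> (\<theta>\<^sup>2 + 2 * \<theta> + \<delta>) / (1 - \<theta>)\<^sup>2 * mnorm ip (T x) * mnorm ip (T y)"
      by (simp add: \<epsilon>_def)
  qed
qed

end
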